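(* Let $1<p<\infty$ and let $T\in\mathbb{L}(\ell_p)$ with $\|T\|=1$. Suppose that $\operatorname{dist}(T,\mathbb{K}(\ell_p))<1$ and $M_T=\{\pm x_1,\pm x_2,\ldots,\pm x_k\}$, where $\{x_1,\ldots,x_k\}$ is linearly independent in $\ell_p$. Then $T$ is $k$-smooth.
   Context: $\mathbb{L}(\ell_p)$ ($\mathbb{K}(\ell_p)$) is the space of bounded (compact) linear operators on $\ell_p$ with the operator norm. $M_T=\{x\in\ell_p:\|x\|=1,\ \|Tx\|=\|T\|\}$. For a Banach space $\mathbb{Z}$ and a unit vector $z$, $J(z)=\{f\in \mathbb{Z}^*:\|f\|=1,\ f(z)=1\}$; $z$ is $k$-smooth if $\dim\operatorname{span} J(z)=k$; $T$ is $k$-smooth as a point of the unit sphere of $\mathbb{L}(\ell_p)$. *)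

theory Defs
  imports "HOL-Analysis.Analysis" "HOL-Library.Function_Algebras"
begin

definition fscale :: "real \<Rightarrow> ('a \<Rightarrow> real) \<Rightarrow> ('a \<Rightarrow> real)" where
  "fscale c f = (\<lambda>x. c * f x)"

definition lp :: "real \<Rightarrow> (nat \<Rightarrow> real) set" where
  "lp p = {x. summable (\<lambda>n. \<bar>x n\<bar> powr p)}"

definition lpnorm :: "real \<Rightarrow> (nat \<Rightarrow> real) \<Rightarrow> real" where
  "lpnorm p x = (\<Sum>n. \<bar>x n\<bar> powr p) powr (1 / p)"

text \<open>Bounded linear operators on l_p (extensional: zero outside l_p).\<close>

definition Lop :: "real \<Rightarrow> ((nat \<Rightarrow> real) \<Rightarrow> (nat \<Rightarrow> real)) set" where
  "Lop p = {T. (\<forall>x\<in>lp p. \<forall>y\<in>lp p. T (x + y) = T x + T y)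
              \<and> (\<forall>c. \<forall>x\<in>lp p. T (fscale c x) = fscale c (T x))
              \<and> (\<forall>x\<in>lp p. T x \<in> lp p)
              \<and> (\<exists>C. \<forall>x\<in>lp p. lpnorm p (T x) \<le> C * lpnorm p x)
              \<and> (\<forall>x. x \<notin> lp p \<longrightarrow> T x = 0)}"

definition opnorm :: "real \<Rightarrow> ((nat \<Rightarrow> real) \<Rightarrow> (nat \<Rightarrow> real)) \<Rightarrow> real" where
  "opnorm p T = Sup ((\<lambda>x. lpnorm p (T x)) ` {x \<in> lp p. lpnorm p x \<le> 1})"

text \<open>Compact operators: image of the unit ball is relatively compact
  (sequential form: every sequence in the unit ball has a subsequence whose
  images converge in l_p).\<close>

definition Kop :: "real \<Rightarrow> ((nat \<Rightarrow> real) \<Rightarrow> (nat \<Rightarrow> real)) set" where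
  "Kop p = {K \<in> Lop p. \<forall>s::nat \<Rightarrow> (nat \<Rightarrow> real). (\<forall>n. s n \<in> lp p \<and> lpnorm p (s n) \<le> 1) \<longrightarrow>
              (\<exists>(r::nat \<Rightarrow> nat) y. strict_mono r \<and> y \<in> lp p \<and>
                 (\<lambda>n. lpnorm p (K (s (r n)) - y)) \<longlonglongrightarrow> 0)}"

definition dist_Kop :: "real \<Rightarrow> ((nat \<Rightarrow> real) \<Rightarrow> (nat \<Rightarrow> real)) \<Rightarrow> real" where
  "dist_Kop p T = Inf ((\<lambda>K. opnorm p (T - K)) ` Kop p)"

definition MT :: "real \<Rightarrow> ((nat \<Rightarrow> real) \<Rightarrow> (nat \<Rightarrow> real)) \<Rightarrow> (nat \<Rightarrow> real) set" where
  "MT p T = {x \<in> lp p. lpnorm p x = 1 \<and> lpnorm p (T x) = opnorm p T}"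

definition Ldual :: "real \<Rightarrow> (((nat \<Rightarrow> real) \<Rightarrow> (nat \<Rightarrow> real)) \<Rightarrow> real) set" where
  "Ldual p = {f. (\<forall>S\<in>Lop p. \<forall>T\<in>Lop p. f (S + T) = f S + f T)
              \<and> (\<forall>c. \<forall>S\<in>Lop p. f (\<lambda>x. fscale c (S x)) = c * f S)
              \<and> (\<exists>C. \<forall>S\<in>Lop p. \<bar>f S\<bar> \<le> C * opnorm p S)
              \<and> (\<forall>S. S \<notin> Lop p \<longrightarrow> f S = 0)}"

definition dualnorm :: "real \<Rightarrow> (((nat \<Rightarrow> real) \<Rightarrow> (nat \<Rightarrow> real)) \<Rightarrow> real) \<Rightarrow> real" where
  "dualnorm p f = Sup ((\<lambda>S. \<bar>f S\<bar>) ` {S \<in> Lop p. opnorm p S \<le> 1})"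

definition Jset :: "real \<Rightarrow> ((nat \<Rightarrow> real) \<Rightarrow> (nat \<Rightarrow> real)) \<Rightarrow> (((nat \<Rightarrow> real) \<Rightarrow> (nat \<Rightarrow> real)) \<Rightarrow> real) set" where
  "Jset p T = {f \<in> Ldual p. dualnorm p f = 1 \<and> f T = 1}"

definition k_smooth :: "real \<Rightarrow> nat \<Rightarrow> ((nat \<Rightarrow> real) \<Rightarrow> (nat \<Rightarrow> real)) \<Rightarrow> bool" where
  "k_smooth p k T \<longleftrightarrow> (\<exists>B. finite B \<and> card B = k \<and> \<not> module.dependent fscale B
       \<and> module.span fscale B = module.span fscale (Jset p T))"

end

theory Submission
  imports Defs
begin

lemma fscale_apply[simp]: "fscale c f x = c * f x" by (simp add: fscale_def)

lemma lp_iff: "x \<in> lp r \<longleftrightarrow> summable (\<lambda>n. \<bar>x n\<bar> powr r)" by (simp add: lp_def)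

lemma lp_zero[simp]: "0 \<in> lp r" by (simp add: lp_def)

lemma lpnorm_0[simp]: "lpnorm r 0 = 0" by (simp add: lpnorm_def)

lemma lpnorm_nonneg: "0 \<le> lpnorm r x" by (simp add: lpnorm_def)

lemma lp_scale: assumes "x \<in> lp r" shows "fscale c x \<in> lp r"
proof -
  have "summable (\<lambda>n. \<bar>c\<bar> powr r * \<bar>x n\<bar> powr r)"
    using assms by (intro summable_mult) (simp add: lp_def)
  then show ?thesis by (simp add: lp_def abs_mult powr_mult)
qed

lemma suminf_powr_nonneg: "0 \<le> (\<Sum>n. \<bar>x n\<bar> powr r)" if "x \<in> lp r" for x :: "nat \<Rightarrow> real"
  using that by (intro suminf_nonneg) (auto simp: lp_def)

lemma lpnorm_scale: assumes "x \<in> lp r" "r > 0" shows "lpnorm r (fscale c x) = \<bar>c\<bar> * lpnorm r x"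
proof -
  have "(\<Sum>n. \<bar>c * x n\<bar> powr r) = (\<Sum>n. \<bar>c\<bar> powr r * \<bar>x n\<bar> powr r)"
    by (simp add: abs_mult powr_mult)
  also have "\<dots> = \<bar>c\<bar> powr r * (\<Sum>n. \<bar>x n\<bar> powr r)"
    using assms by (intro suminf_mult) (simp add: lp_def)
  finally have *: "(\<Sum>n. \<bar>c * x n\<bar> powr r) = \<bar>c\<bar> powr r * (\<Sum>n. \<bar>x n\<bar> powr r)" .
  have "(\<bar>c\<bar> powr r) powr (1/r) = \<bar>c\<bar>" using assms by (simp add: powr_powr)
  then show ?thesis unfolding lpnorm_def fscale_def *
    using suminf_powr_nonneg[OF assms(1)] by (simp add: powr_mult)
qed

lemma lp_add: assumes "x \<in> lp r" "y \<in> lp r" "r > 0" shows "x + y \<in> lp r"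
proof -
  have b: "\<bar>x n + y n\<bar> powr r \<le> 2 powr r * (\<bar>x n\<bar> powr r + \<bar>y n\<bar> powr r)" for n
  proof -
    have "\<bar>x n + y n\<bar> powr r \<le> (2 * max \<bar>x n\<bar> \<bar>y n\<bar>) powr r"
      using assms by (intro powr_mono2) auto
    also have "\<dots> = 2 powr r * max \<bar>x n\<bar> \<bar>y n\<bar> powr r" by (simp add: powr_mult)
    also have "max \<bar>x n\<bar> \<bar>y n\<bar> powr r \<le> \<bar>x n\<bar> powr r + \<bar>y n\<bar> powr r"
      by (cases "\<bar>x n\<bar> \<le> \<bar>y n\<bar>") (auto simp: max_def)
    finally show ?thesis by simp
  qed
  have "summable (\<lambda>n. 2 powr r * (\<bar>x n\<bar> powr r + \<bar>y n\<bar> powr r))"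
    using assms by (intro summable_mult summable_add) (auto simp: lp_def)
  then have "summable (\<lambda>n. \<bar>x n + y n\<bar> powr r)"
    by (rule summable_comparison_test') (use b in auto)
  then show ?thesis by (simp add: lp_def)
qed

lemma lp_uminus: "x \<in> lp r \<Longrightarrow> - x \<in> lp r" by (simp add: lp_def)

lemma lp_diff: "x \<in> lp r \<Longrightarrow> y \<in> lp r \<Longrightarrow> r > 0 \<Longrightarrow> x - y \<in> lp r"
  using lp_add[of x r "-y"] lp_uminus[of y r] by simp

lemma lpnorm_uminus[simp]: "lpnorm r (- x) = lpnorm r x" by (simp add: lpnorm_def)

lemma lpnorm_powr: assumes "x \<in> lp r" "r > 0" shows "lpnorm r x powr r = (\<Sum>n. \<bar>x n\<bar> powr r)"
  using assms suminf_powr_nonneg[OF assms(1)] by (simp add: lpnorm_def powr_powr)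

lemma coord_le: assumes "x \<in> lp r" "r > 0" shows "\<bar>x m\<bar> \<le> lpnorm r x"
proof -
  have "\<bar>x m\<bar> powr r \<le> (\<Sum>n. \<bar>x n\<bar> powr r)"
    using assms sum_le_suminf[of "\<lambda>n. \<bar>x n\<bar> powr r" "{m}"] by (auto simp: lp_def)
  then have "(\<bar>x m\<bar> powr r) powr (1/r) \<le> (\<Sum>n. \<bar>x n\<bar> powr r) powr (1/r)"
    using assms by (intro powr_mono2) auto
  then show ?thesis using assms by (simp add: lpnorm_def powr_powr)
qed

lemma lpnorm_eq_0: assumes "x \<in> lp r" "r > 0" "lpnorm r x = 0" shows "x = 0"
  using coord_le[OF assms(1,2)] assms(3) by (auto intro!: ext)

definition conj :: "real \<Rightarrow> real \<Rightarrow> bool" where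
  "conj p q \<longleftrightarrow> 1 < p \<and> 1 < q \<and> 1/p + 1/q = 1"

lemma conj_sym: "conj p q \<Longrightarrow> conj q p" by (auto simp: conj_def)

lemma conj_pos: "conj p q \<Longrightarrow> p > 0 \<and> q > 0 \<and> p > 1 \<and> q > 1" by (auto simp: conj_def)

lemma conj_mult: "conj p q \<Longrightarrow> (p - 1) * q = p"
  by (auto simp: conj_def field_simps)

lemma holder:
  assumes c: "conj p q" and a: "a \<in> lp p" and b: "b \<in> lp q"
  shows "summable (\<lambda>n. \<bar>a n * b n\<bar>) \<and> (\<Sum>n. \<bar>a n * b n\<bar>) \<le> lpnorm p a * lpnorm q b"
proof (cases "lpnorm p a = 0 \<or> lpnorm q b = 0")
  case True
  then have "a = 0 \<or> b = 0" using lpnorm_eq_0[OF a] lpnorm_eq_0[OF b] conj_pos[OF c] by auto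
  then show ?thesis by auto
next
  case False
  define A where "A = lpnorm p a"
  define B where "B = lpnorm q b"
  have A: "A > 0" and B: "B > 0" using False lpnorm_nonneg[of p a] lpnorm_nonneg[of q b]
    by (auto simp: A_def B_def)
  have pq: "p > 0" "q > 0" "p > 1" "q > 1" "1/p + 1/q = 1" using c by (auto simp: conj_def)
  define g where "g n = \<bar>a n\<bar> powr p / (A powr p * p) + \<bar>b n\<bar> powr q / (B powr q * q)" for n
  have le: "\<bar>a n * b n\<bar> \<le> A * B * g n" for n
  proof -
    have "(\<bar>a n\<bar> / A) * (\<bar>b n\<bar> / B) \<le> (\<bar>a n\<bar> / A) powr p / p + (\<bar>b n\<bar> / B) powr q / q"
      using Youngs_inequality[of p q "\<bar>a n\<bar> / A" "\<bar>b n\<bar> / B"] pq A B by auto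
    also have "\<dots> = g n" using A B by (simp add: g_def powr_divide)
    finally show ?thesis using A B by (simp add: field_simps abs_mult)
  qed
  have sa: "summable (\<lambda>n. \<bar>a n\<bar> powr p)" and sb: "summable (\<lambda>n. \<bar>b n\<bar> powr q)"
    using a b by (auto simp: lp_def)
  have sg: "summable g" unfolding g_def
    by (intro summable_add summable_divide sa sb)
  have sum_g: "suminf g = 1"
  proof -
    have "suminf g = (\<Sum>n. \<bar>a n\<bar> powr p / (A powr p * p)) + (\<Sum>n. \<bar>b n\<bar> powr q / (B powr q * q))"
      unfolding g_def by (rule suminf_add[symmetric]) (intro summable_divide sa sb)+
    also have "\<dots> = (\<Sum>n. \<bar>a n\<bar> powr p) / (A powr p * p) + (\<Sum>n. \<bar>b n\<bar> powr q) / (B powr q * q)"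
      using suminf_divide[OF sa] suminf_divide[OF sb] by simp
    also have "\<dots> = 1/p + 1/q"
      using lpnorm_powr[OF a, symmetric] lpnorm_powr[OF b, symmetric] pq A B
      by (simp add: A_def B_def)
    finally show ?thesis using pq by simp
  qed
  have s1: "summable (\<lambda>n. A * B * g n)" using sg by (rule summable_mult)
  have s2: "summable (\<lambda>n. \<bar>a n * b n\<bar>)"
    by (rule summable_comparison_test'[OF s1]) (use le in auto)
  have "(\<Sum>n. \<bar>a n * b n\<bar>) \<le> (\<Sum>n. A * B * g n)"
    by (rule suminf_le[OF le s2 s1])
  also have "\<dots> = A * B" using sg sum_g by (simp add: suminf_mult)
  finally show ?thesis using s2 by (simp add: A_def B_def)
qed

definition pair :: "(nat \<Rightarrow> real) \<Rightarrow> (nat \<Rightarrow> real) \<Rightarrow> real" where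
  "pair b x = (\<Sum>n. b n * x n)"

lemma pair_commute: "pair b x = pair x b" by (simp add: pair_def mult.commute)

lemma pair_summable: assumes "conj p q" "x \<in> lp p" "b \<in> lp q"
  shows "summable (\<lambda>n. b n * x n)"
proof -
  have "summable (\<lambda>n. \<bar>x n * b n\<bar>)" using holder[OF assms] by blast
  then have "summable (\<lambda>n. \<bar>b n * x n\<bar>)" by (simp only: mult.commute)
  then show ?thesis by (rule summable_rabs_cancel)
qed

lemma pair_bound: assumes "conj p q" "x \<in> lp p" "b \<in> lp q"
  shows "\<bar>pair b x\<bar> \<le> lpnorm q b * lpnorm p x"
proof -
  have "\<bar>pair b x\<bar> \<le> (\<Sum>n. \<bar>x n * b n\<bar>)"
  proof -
    have "summable (\<lambda>n. \<bar>x n * b n\<bar>)" using holder[OF assms] by blast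
    then have s: "summable (\<lambda>n. \<bar>b n * x n\<bar>)" by (simp only: mult.commute)
    have "\<bar>pair b x\<bar> \<le> (\<Sum>n. \<bar>b n * x n\<bar>)" unfolding pair_def by (rule summable_rabs[OF s])
    moreover have "(\<Sum>n. \<bar>b n * x n\<bar>) = (\<Sum>n. \<bar>x n * b n\<bar>)" by (simp only: mult.commute)
    ultimately show ?thesis by simp
  qed
  also have "\<dots> \<le> lpnorm q b * lpnorm p x" using holder[OF assms] by (simp only: mult.commute)
  finally show ?thesis .
qed

lemma pair_add_right: assumes "conj p q" "x \<in> lp p" "y \<in> lp p" "b \<in> lp q"
  shows "pair b (x + y) = pair b x + pair b y"
  unfolding pair_def using pair_summable[OF assms(1,2,4)] pair_summable[OF assms(1,3,4)]
  by (simp add: distrib_left suminf_add)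

lemma pair_scale_right: assumes "conj p q" "x \<in> lp p" "b \<in> lp q"
  shows "pair b (fscale c x) = c * pair b x"
proof -
  have "(\<Sum>n. c * (b n * x n)) = c * (\<Sum>n. b n * x n)"
    by (rule suminf_mult[OF pair_summable[OF assms]])
  then show ?thesis unfolding pair_def fscale_def by (simp add: algebra_simps)
qed
 
lemma pair_uminus_right: assumes "conj p q" "x \<in> lp p" "b \<in> lp q"
  shows "pair b (- x) = - pair b x"
  unfolding pair_def using suminf_minus[OF pair_summable[OF assms]] by simp

lemma pair_diff_right: assumes "conj p q" "x \<in> lp p" "y \<in> lp p" "b \<in> lp q"
  shows "pair b (x - y) = pair b x - pair b y"
  using pair_add_right[OF assms(1,2) lp_uminus[OF assms(3)] assms(4)] pair_uminus_right[OF assms(1,3,4)]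
  by simp

lemma pair_uminus_left: assumes "conj p q" "x \<in> lp p" "b \<in> lp q"
  shows "pair (- b) x = - pair b x"
  unfolding pair_def using suminf_minus[OF pair_summable[OF assms]] by simp

definition Jd :: "real \<Rightarrow> (nat \<Rightarrow> real) \<Rightarrow> (nat \<Rightarrow> real)" where
  "Jd p u = (\<lambda>n. sgn (u n) * \<bar>u n\<bar> powr (p - 1) / lpnorm p u powr (p - 1))"

lemma Jd_props:
  assumes c: "conj p q" and u: "u \<in> lp p" "u \<noteq> 0"
  shows "Jd p u \<in> lp q" "lpnorm q (Jd p u) = 1" "pair (Jd p u) u = lpnorm p u"
proof -
  have pq: "p > 0" "q > 0" "p > 1" "q > 1" using c by (auto simp: conj_def)
  define N where "N = lpnorm p u"
  have N: "N > 0" using lpnorm_eq_0[OF u(1) pq(1)] u(2) lpnorm_nonneg[of p u] by (force simp: N_def)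
  have NP: "N powr p = (\<Sum>n. \<bar>u n\<bar> powr p)" using lpnorm_powr[OF u(1) pq(1)] by (simp add: N_def)
  have su: "summable (\<lambda>n. \<bar>u n\<bar> powr p)" using u by (simp add: lp_def)
  have eq: "\<bar>Jd p u n\<bar> powr q = \<bar>u n\<bar> powr p / N powr p" for n
  proof -
    have "\<bar>Jd p u n\<bar> = \<bar>u n\<bar> powr (p - 1) / N powr (p - 1)"
      using N by (simp add: Jd_def N_def abs_mult abs_sgn_eq)
    then have "\<bar>Jd p u n\<bar> powr q = (\<bar>u n\<bar> powr (p - 1)) powr q / (N powr (p - 1)) powr q"
      by (simp add: powr_divide)
    also have "\<dots> = \<bar>u n\<bar> powr p / N powr p"
      by (simp add: powr_powr conj_mult[OF c])
    finally show ?thesis .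
  qed
  have sJ: "summable (\<lambda>n. \<bar>Jd p u n\<bar> powr q)" unfolding eq by (intro summable_divide su)
  then show J: "Jd p u \<in> lp q" by (simp add: lp_def)
  have "(\<Sum>n. \<bar>Jd p u n\<bar> powr q) = 1" unfolding eq suminf_divide[OF su] NP[symmetric]
    using N by simp
  then show "lpnorm q (Jd p u) = 1" by (simp add: lpnorm_def)
  have eq2: "Jd p u n * u n = \<bar>u n\<bar> powr p / N powr (p - 1)" for n
  proof (cases "u n = 0")
    case True then show ?thesis by (simp add: Jd_def)
  next
    case False
    have "sgn (u n) * u n = \<bar>u n\<bar>" by (simp add: sgn_mult_abs abs_sgn)
    have "\<bar>u n\<bar> powr (p - 1) * \<bar>u n\<bar> = \<bar>u n\<bar> powr p"
      using False by (simp add: powr_diff)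
    then show ?thesis using False by (auto simp: Jd_def N_def sgn_if)
  qed
  have "pair (Jd p u) u = (\<Sum>n. \<bar>u n\<bar> powr p) / N powr (p - 1)"
    unfolding pair_def eq2 by (rule suminf_divide[OF su])
  also have "\<dots> = N" unfolding NP[symmetric] using N by (simp add: powr_diff)
  finally show "pair (Jd p u) u = lpnorm p u" by (simp add: N_def)
qed

lemma minkowski: assumes c: "conj p q" and x: "x \<in> lp p" and y: "y \<in> lp p"
  shows "lpnorm p (x + y) \<le> lpnorm p x + lpnorm p y"
proof (cases "x + y = 0")
  case True then show ?thesis using lpnorm_nonneg[of p x] lpnorm_nonneg[of p y] by simp
next
  case False
  have pq: "p > 0" using c by (auto simp: conj_def)
  have xy: "x + y \<in> lp p" using lp_add[OF x y pq] .
  note J = Jd_props[OF c xy False]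
  have "lpnorm p (x + y) = pair (Jd p (x + y)) x + pair (Jd p (x + y)) y"
    using J(3) pair_add_right[OF c x y J(1)] by simp
  also have "\<dots> \<le> 1 * lpnorm p x + 1 * lpnorm p y"
    using pair_bound[OF c x J(1)] pair_bound[OF c y J(1)] J(2) by (intro add_mono) auto
  finally show ?thesis by simp
qed

lemma conj_exists: "1 < p \<Longrightarrow> conj p (p / (p - 1))"
  by (auto simp: conj_def field_simps)

lemma minkowski': assumes "1 < p" "x \<in> lp p" "y \<in> lp p"
  shows "lpnorm p (x + y) \<le> lpnorm p x + lpnorm p y"
  using minkowski[OF conj_exists[OF assms(1)] assms(2,3)] .

lemma lpnorm_diff_tri: assumes "1 < p" "x \<in> lp p" "y \<in> lp p" "z \<in> lp p"
  shows "lpnorm p (x - y) \<le> lpnorm p (x - z) + lpnorm p (z - y)"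
  using minkowski'[OF assms(1) lp_diff[OF assms(2,4)] lp_diff[OF assms(4,3)]] assms by auto

definition hdN :: "nat \<Rightarrow> (nat \<Rightarrow> real) \<Rightarrow> (nat \<Rightarrow> real)" where
  "hdN N x = (\<lambda>n. if n < N then x n else 0)"
definition tlN :: "nat \<Rightarrow> (nat \<Rightarrow> real) \<Rightarrow> (nat \<Rightarrow> real)" where
  "tlN N x = (\<lambda>n. if n < N then 0 else x n)"

lemma hd_tl: "x = hdN N x + tlN N x" by (auto simp: hdN_def tlN_def)

lemma lp_tlN: assumes "x \<in> lp p" shows "tlN N x \<in> lp p"
proof -
  have "summable (\<lambda>n. \<bar>tlN N x n\<bar> powr p)"
    by (rule summable_comparison_test'[of "\<lambda>n. \<bar>x n\<bar> powr p"]) (use assms in \<open>auto simp: lp_def tlN_def\<close>)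
  then show ?thesis by (simp add: lp_def)
qed

lemma lp_hdN: assumes "x \<in> lp p" shows "hdN N x \<in> lp p"
proof -
  have "summable (\<lambda>n. \<bar>hdN N x n\<bar> powr p)"
    by (rule summable_comparison_test'[of "\<lambda>n. \<bar>x n\<bar> powr p"]) (use assms in \<open>auto simp: lp_def hdN_def\<close>)
  then show ?thesis by (simp add: lp_def)
qed

lemma tl_sum: assumes "x \<in> lp p"
  shows "(\<Sum>n. \<bar>tlN N x n\<bar> powr p) = (\<Sum>n. \<bar>x n\<bar> powr p) - (\<Sum>n<N. \<bar>x n\<bar> powr p)"
proof -
  define f where "f = (\<lambda>n. \<bar>x n\<bar> powr p)"
  define g where "g n = (if n < N then f n else 0)" for n
  have sf: "summable f" using assms by (simp add: lp_def f_def)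
  have sg: "summable g" unfolding g_def by (rule summable_finite[of "{..<N}"]) auto
  have g: "suminf g = (\<Sum>n<N. f n)"
    unfolding g_def by (subst suminf_finite[of "{..<N}"]) auto
  have "(\<Sum>n. \<bar>tlN N x n\<bar> powr p) = (\<Sum>n. f n - g n)"
    by (rule suminf_cong) (auto simp: tlN_def f_def g_def)
  also have "\<dots> = suminf f - suminf g" using suminf_diff[OF sf sg] by simp
  finally show ?thesis using g by (simp add: f_def)
qed

lemma tl_norm_lim: assumes "x \<in> lp p" "p > 0" shows "(\<lambda>N. lpnorm p (tlN N x)) \<longlonglongrightarrow> 0"
proof -
  have sf: "summable (\<lambda>n. \<bar>x n\<bar> powr p)" using assms by (simp add: lp_def)
  have "(\<lambda>N. (\<Sum>n. \<bar>x n\<bar> powr p) - (\<Sum>n<N. \<bar>x n\<bar> powr p)) \<longlonglongrightarrow> (\<Sum>n. \<bar>x n\<bar> powr p) - (\<Sum>n. \<bar>x n\<bar> powr p)"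
    by (intro tendsto_intros summable_LIMSEQ sf)
  then have "(\<lambda>N. (\<Sum>n. \<bar>tlN N x n\<bar> powr p)) \<longlonglongrightarrow> 0" by (simp add: tl_sum[OF assms(1)])
  then have "(\<lambda>N. (\<Sum>n. \<bar>tlN N x n\<bar> powr p) powr (1/p)) \<longlonglongrightarrow> 0"
    by (rule tendsto_zero_powrI[where b="1/p"]) (use assms lp_tlN[OF assms(1)] suminf_powr_nonneg in auto)
  then show ?thesis by (simp add: lpnorm_def)
qed

lemma pair_hdN: "pair b (hdN N x) = (\<Sum>n<N. b n * x n)"
  unfolding pair_def hdN_def by (subst suminf_finite[of "{..<N}"]) auto

lemma pair_split: assumes "conj p q" "x \<in> lp p" "b \<in> lp q"
  shows "pair b x = (\<Sum>n<N. b n * x n) + pair b (tlN N x)"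
  using pair_add_right[OF assms(1) lp_hdN[OF assms(2)] lp_tlN[OF assms(2)] assms(3)] hd_tl[of x N]
    pair_hdN by metis

lemma pair_conv:
  assumes c: "conj p q" and x: "x \<in> lp p" and b: "\<And>k. b k \<in> lp q" "\<And>k. lpnorm q (b k) \<le> B"
    and b0: "b0 \<in> lp q" and lim: "\<And>n. (\<lambda>k. b k n) \<longlonglongrightarrow> b0 n"
  shows "(\<lambda>k. pair (b k) x) \<longlonglongrightarrow> pair b0 x"
proof -
  have pq: "p > 0" "q > 0" using c by (auto simp: conj_def)
  define d where "d k = b k - b0" for k
  define M where "M = B + lpnorm q b0 + 1"
  have d: "d k \<in> lp q" for k using lp_diff[OF b(1) b0 pq(2)] by (simp add: d_def)
  have dM: "lpnorm q (d k) \<le> M" for k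
    using minkowski[OF conj_sym[OF c] b(1)[of k] lp_uminus[OF b0]] b(2)[of k] by (simp add: d_def M_def)
  have M: "M > 0" unfolding M_def using b(2)[of 0] lpnorm_nonneg[of q "b 0"] lpnorm_nonneg[of q b0] by linarith
  have eqd: "pair (b k) x - pair b0 x = pair (d k) x" for k
    using pair_diff_right[OF conj_sym[OF c] b(1)[of k] b0 x] by (simp add: pair_commute d_def)
  have "(\<lambda>k. pair (d k) x) \<longlonglongrightarrow> 0"
  proof (rule LIMSEQ_I)
    fix r :: real assume r: "r > 0"
    have "\<forall>\<^sub>F N in sequentially. lpnorm p (tlN N x) < r / (2 * M)"
      using tl_norm_lim[OF x pq(1)] r M by (auto simp: order_tendsto_iff)
    then obtain N where N: "lpnorm p (tlN N x) < r / (2 * M)" by (meson eventually_sequentially order_refl)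
    have "(\<lambda>k. \<Sum>n<N. d k n * x n) \<longlonglongrightarrow> (\<Sum>n<N. 0 * x n)"
      using lim unfolding d_def by (intro tendsto_intros) (simp add: LIM_zero)
    then have "(\<lambda>k. \<bar>\<Sum>n<N. d k n * x n\<bar>) \<longlonglongrightarrow> 0" by (simp add: tendsto_rabs_zero)
    then have "\<forall>\<^sub>F k in sequentially. \<bar>\<Sum>n<N. d k n * x n\<bar> < r / 2"
      using r by (intro order_tendstoD(2)) auto
    then obtain k0 where k0: "\<And>k. k \<ge> k0 \<Longrightarrow> \<bar>\<Sum>n<N. d k n * x n\<bar> < r / 2"
      by (auto simp: eventually_sequentially)
    show "\<exists>k0. \<forall>k\<ge>k0. norm (pair (d k) x - 0) < r"
    proof (intro exI allI impI)
      fix k assume "k \<ge> k0"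
      have t: "\<bar>pair (d k) (tlN N x)\<bar> \<le> M * (r / (2 * M))"
      proof -
        have "\<bar>pair (d k) (tlN N x)\<bar> \<le> lpnorm q (d k) * lpnorm p (tlN N x)"
          by (rule pair_bound[OF c lp_tlN[OF x] d])
        also have "\<dots> \<le> M * (r / (2 * M))"
          using dM[of k] N lpnorm_nonneg[of q "d k"] lpnorm_nonneg[of p "tlN N x"]
          by (intro mult_mono) auto
        finally show ?thesis .
      qed
      have "M * (r / (2 * M)) = r / 2" using M by simp
      then show "norm (pair (d k) x - 0) < r"
        using pair_split[OF c x d, of k N] k0[OF \<open>k \<ge> k0\<close>] t by simp
    qed
  qed
  then have "(\<lambda>k. pair (b k) x - pair b0 x) \<longlonglongrightarrow> 0" using eqd by simp
  then show ?thesis by (rule LIM_zero_cancel)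
qed

lemma weak_compact:
  fixes s :: "nat \<Rightarrow> nat \<Rightarrow> real"
  assumes p: "p > 0" and s: "\<And>n. s n \<in> lp p" "\<And>n. lpnorm p (s n) \<le> 1"
  shows "\<exists>r z. strict_mono r \<and> z \<in> lp p \<and> lpnorm p z \<le> 1 \<and> (\<forall>m. (\<lambda>n. s (r n) m) \<longlonglongrightarrow> z m)"
proof -
  define S where "S = PiE UNIV (\<lambda>_::nat. {-1..1::real})"
  have "compactin (product_topology (\<lambda>_. euclidean) UNIV) S"
    unfolding S_def by (simp add: compactin_PiE compactin_euclidean_iff)
  then have "compact S" by (simp add: euclidean_product_topology compactin_euclidean_iff)
  then have sc: "seq_compact S" by (rule compact_imp_seq_compact)
  have sS: "s n \<in> S" for n
  proof -
    have "\<bar>s n m\<bar> \<le> 1" for m using coord_le[OF s(1) p, of n m] s(2)[of n] by linarith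
    then show ?thesis by (auto simp: S_def PiE_iff abs_le_iff)
  qed
  obtain l r where l: "l \<in> S" and r: "strict_mono r" and lim: "(s \<circ> r) \<longlonglongrightarrow> l"
    using seq_compactE[OF sc, of s] sS by blast
  have coord: "(\<lambda>n. s (r n) m) \<longlonglongrightarrow> l m" for m
  proof -
    have "((\<lambda>n. ((s \<circ> r) n) m) \<longlongrightarrow> l m) sequentially"
      by (rule continuous_on_tendsto_compose[OF continuous_on_product_coordinates lim]) auto
    then show ?thesis by simp
  qed
  have part: "(\<Sum>m<N. \<bar>l m\<bar> powr p) \<le> 1" for N
  proof -
    have "(\<lambda>n. \<Sum>m<N. \<bar>s (r n) m\<bar> powr p) \<longlonglongrightarrow> (\<Sum>m<N. \<bar>l m\<bar> powr p)"
      using p by (intro tendsto_sum tendsto_powr2 tendsto_rabs coord tendsto_const) auto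
    moreover have "(\<Sum>m<N. \<bar>s (r n) m\<bar> powr p) \<le> 1" for n
    proof -
      have "(\<Sum>m<N. \<bar>s (r n) m\<bar> powr p) \<le> (\<Sum>m. \<bar>s (r n) m\<bar> powr p)"
        using s(1)[of "r n"] by (intro sum_le_suminf) (auto simp: lp_def)
      also have "\<dots> = lpnorm p (s (r n)) powr p" using lpnorm_powr[OF s(1) p] by simp
      also have "\<dots> \<le> 1 powr p" using s(2)[of "r n"] p lpnorm_nonneg by (intro powr_mono2) auto
      finally show ?thesis by simp
    qed
    ultimately show ?thesis by (intro LIMSEQ_le_const2) auto
  qed
  have sl: "summable (\<lambda>m. \<bar>l m\<bar> powr p)" by (rule summableI_nonneg_bounded[OF _ part]) auto
  have "(\<Sum>m. \<bar>l m\<bar> powr p) \<le> 1" by (rule suminf_le_const[OF sl part])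
  then have "lpnorm p l \<le> 1 powr (1/p)" unfolding lpnorm_def
    using suminf_nonneg[OF sl] p by (intro powr_mono2) auto
  then show ?thesis using r sl coord by (intro exI[of _ r] exI[of _ l]) (auto simp: lp_def)
qed

lemma powr_sum_le: fixes u v :: real assumes "p > 0" shows "\<bar>u + v\<bar> powr p \<le> 2 powr p * (\<bar>u\<bar> powr p + \<bar>v\<bar> powr p)"
proof -
  have "\<bar>u + v\<bar> powr p \<le> (2 * max \<bar>u\<bar> \<bar>v\<bar>) powr p"
    using assms by (intro powr_mono2) auto
  also have "\<dots> = 2 powr p * max \<bar>u\<bar> \<bar>v\<bar> powr p" by (simp add: powr_mult)
  also have "max \<bar>u\<bar> \<bar>v\<bar> powr p \<le> \<bar>u\<bar> powr p + \<bar>v\<bar> powr p"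
    by (cases "\<bar>u\<bar> \<le> \<bar>v\<bar>") (auto simp: max_def)
  finally show ?thesis by simp
qed

lemma elem_ineq:
  assumes p: "p > 0" and e: "e > 0"
  shows "\<exists>C. \<forall>u v::real. \<bar>\<bar>u + v\<bar> powr p - \<bar>v\<bar> powr p\<bar> \<le> e * \<bar>v\<bar> powr p + C * \<bar>u\<bar> powr p"
proof -
  have l1: "((\<lambda>t. (1 + t) powr p) \<longlongrightarrow> 1) (at_right 0)"
    using p by (intro tendsto_eq_intros) (auto intro!: eventuallyI)
  have l2: "((\<lambda>t. (1 - t) powr p) \<longlongrightarrow> 1) (at_right 0)"
    using p by (intro tendsto_eq_intros) auto
  have e1: "\<forall>\<^sub>F t in at_right 0. (1 + t) powr p < 1 + e"
    using order_tendstoD(2)[OF l1, of "1 + e"] e by auto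
  have e2: "\<forall>\<^sub>F t in at_right 0. (1 - t) powr p > 1 - e"
    using order_tendstoD(1)[OF l2, of "1 - e"] e by auto
  have e3: "\<forall>\<^sub>F t in at_right 0. t < (1::real)"
    by (auto simp: eventually_at_right_field intro!: exI[of _ 1])
  have "\<forall>\<^sub>F t in at_right 0. (1 + t) powr p < 1 + e \<and> (1 - t) powr p > 1 - e \<and> t < (1::real)"
    using e1 e2 e3 by (auto intro: eventually_conj)
  then obtain b :: real where b: "b > 0" "\<And>y. y > 0 \<Longrightarrow> y < b \<Longrightarrow> (1 + y) powr p < 1 + e \<and> (1 - y) powr p > 1 - e \<and> y < 1"
    by (auto simp: eventually_at_right_field)
  define t where "t = b / 2"
  have t: "(1 + t) powr p < 1 + e" "(1 - t) powr p > 1 - e" "t < 1" "t > 0"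
    using b(2)[of t] b(1) by (auto simp: t_def)
  define C where "C = (1 + 1/t) powr p"
  have "\<bar>\<bar>u + v\<bar> powr p - \<bar>v\<bar> powr p\<bar> \<le> e * \<bar>v\<bar> powr p + C * \<bar>u\<bar> powr p" for u v :: real
  proof (cases "\<bar>u\<bar> < t * \<bar>v\<bar>")
    case True
    have up: "\<bar>u + v\<bar> powr p \<le> ((1 + t) * \<bar>v\<bar>) powr p"
      using True p by (intro powr_mono2) (auto simp: algebra_simps)
    have "\<bar>v\<bar> - \<bar>u\<bar> \<le> \<bar>u + v\<bar>" by arith
    then have "(1 - t) * \<bar>v\<bar> \<le> \<bar>u + v\<bar>" using True by (simp add: algebra_simps)
    then have lo: "((1 - t) * \<bar>v\<bar>) powr p \<le> \<bar>u + v\<bar> powr p"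
      using True p t by (intro powr_mono2) auto
    have "\<bar>\<bar>u + v\<bar> powr p - \<bar>v\<bar> powr p\<bar> \<le> e * \<bar>v\<bar> powr p"
    proof -
      have a: "((1 + t) * \<bar>v\<bar>) powr p = (1 + t) powr p * \<bar>v\<bar> powr p"
        using t by (simp add: powr_mult)
      have b: "((1 - t) * \<bar>v\<bar>) powr p = (1 - t) powr p * \<bar>v\<bar> powr p"
        using t by (simp add: powr_mult)
      have c1: "(1 + t) powr p * \<bar>v\<bar> powr p \<le> (1 + e) * \<bar>v\<bar> powr p"
        using t by (intro mult_right_mono) auto
      have c2: "(1 - e) * \<bar>v\<bar> powr p \<le> (1 - t) powr p * \<bar>v\<bar> powr p"
        using t by (intro mult_right_mono) auto
      show ?thesis using up lo a b c1 c2 by (auto simp: algebra_simps abs_le_iff)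
    qed
    moreover have "0 \<le> C * \<bar>u\<bar> powr p" by (simp add: C_def)
    ultimately show ?thesis by linarith
  next
    case False
    then have v: "\<bar>v\<bar> \<le> \<bar>u\<bar> / t" using t by (simp add: field_simps)
    have "\<bar>u + v\<bar> \<le> \<bar>u\<bar> + \<bar>v\<bar>" by (rule abs_triangle_ineq)
    then have "\<bar>u + v\<bar> \<le> (1 + 1/t) * \<bar>u\<bar>" using v t by (simp add: algebra_simps)
    then have A: "\<bar>u + v\<bar> powr p \<le> C * \<bar>u\<bar> powr p"
      unfolding C_def using t p by (subst powr_mult[symmetric]) (auto intro!: powr_mono2)
    have "\<bar>v\<bar> \<le> (1 + 1/t) * \<bar>u\<bar>" using v t by (simp add: algebra_simps)
    then have B: "\<bar>v\<bar> powr p \<le> C * \<bar>u\<bar> powr p"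
      unfolding C_def using t p by (subst powr_mult[symmetric]) (auto intro!: powr_mono2)
    have n0: "0 \<le> e * \<bar>v\<bar> powr p" using e by simp
    have n1: "0 \<le> \<bar>v\<bar> powr p" "0 \<le> \<bar>u + v\<bar> powr p" by auto
    show ?thesis unfolding abs_le_iff using A B n0 n1 by linarith
  qed
  then show ?thesis by blast
qed

lemma summable_tl0: "summable g \<Longrightarrow> summable (\<lambda>m. if m < N then 0 else g m)"
  for g :: "nat \<Rightarrow> real"
proof -
  assume sg: "summable g"
  have sh: "summable (\<lambda>m. if m < N then g m else 0)" by (rule summable_finite[of "{..<N}"]) auto
  have "summable (\<lambda>m. g m - (if m < N then g m else 0))" by (rule summable_diff[OF sg sh])
  then show ?thesis by (simp add: if_distrib cong: if_cong)
qed

lemma suminf_split_tl0: fixes g :: "nat \<Rightarrow> real" assumes sg: "summable g"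
  shows "suminf g = (\<Sum>m<N. g m) + (\<Sum>m. if m < N then 0 else g m)"
proof -
  have sh: "summable (\<lambda>m. if m < N then g m else 0)" by (rule summable_finite[of "{..<N}"]) auto
  have h: "(\<Sum>m. if m < N then g m else 0) = (\<Sum>m<N. g m)"
    by (subst suminf_finite[of "{..<N}"]) auto
  have "(\<Sum>m. if m < N then 0 else g m) = (\<Sum>m. g m - (if m < N then g m else 0))"
    by (rule suminf_cong) auto
  also have "\<dots> = suminf g - (\<Sum>m<N. g m)" using suminf_diff[OF sg sh] h by simp
  finally show ?thesis by simp
qed

lemma tailA_lim: assumes "summable A" shows "(\<lambda>N. \<Sum>m. if m < N then 0 else A m) \<longlonglongrightarrow> (0::real)"
proof -
  have "(\<lambda>N. suminf A - (\<Sum>m<N. A m)) \<longlonglongrightarrow> suminf A - suminf A"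
    by (intro tendsto_intros summable_LIMSEQ assms)
  moreover have "suminf A - (\<Sum>m<N. A m) = (\<Sum>m. if m < N then 0 else A m)" for N
    using suminf_split_tl0[OF assms, of N] by simp
  ultimately show ?thesis by simp
qed

lemma brezis_lieb:
  fixes a :: "nat \<Rightarrow> real" and d :: "nat \<Rightarrow> nat \<Rightarrow> real"
  assumes p: "p > 0" and a: "a \<in> lp p" and d: "\<And>n. d n \<in> lp p" "\<And>n. lpnorm p (d n) \<le> B"
    and lim: "\<And>m. (\<lambda>n. d n m) \<longlonglongrightarrow> 0"
  shows "(\<lambda>n. (\<Sum>m. \<bar>a m + d n m\<bar> powr p) - (\<Sum>m. \<bar>d n m\<bar> powr p)) \<longlonglongrightarrow> (\<Sum>m. \<bar>a m\<bar> powr p)"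
proof -
  define A where "A = (\<lambda>m. \<bar>a m\<bar> powr p)"
  define F where "F = (\<lambda>n m. \<bar>a m + d n m\<bar> powr p - \<bar>d n m\<bar> powr p)"
  have sA: "summable A" using a by (simp add: lp_def A_def)
  have sd: "summable (\<lambda>m. \<bar>d n m\<bar> powr p)" for n using d(1) by (simp add: lp_def)
  have sad: "summable (\<lambda>m. \<bar>a m + d n m\<bar> powr p)" for n
    using lp_add[OF a d(1) p] by (simp add: lp_def)
  have sF: "summable (F n)" for n unfolding F_def by (intro summable_diff sad sd)
  have eqF: "(\<Sum>m. \<bar>a m + d n m\<bar> powr p) - (\<Sum>m. \<bar>d n m\<bar> powr p) = suminf (F n)" for n
    unfolding F_def using suminf_diff[OF sad sd] by simp
  have B0: "B \<ge> 0" using d(2)[of 0] lpnorm_nonneg[of p "d 0"] by linarith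
  define Bp where "Bp = B powr p"
  have dB: "(\<Sum>m. \<bar>d n m\<bar> powr p) \<le> Bp" for n
  proof -
    have "lpnorm p (d n) powr p \<le> B powr p"
      using d(2)[of n] lpnorm_nonneg[of p "d n"] p by (intro powr_mono2) auto
    then show ?thesis using lpnorm_powr[OF d(1) p, of n] by (simp add: Bp_def)
  qed
  have Bp0: "Bp \<ge> 0" by (simp add: Bp_def)
  have "(\<lambda>n. suminf (F n)) \<longlonglongrightarrow> suminf A"
  proof (rule LIMSEQ_I)
    fix r :: real assume r: "r > 0"
    define e where "e = r / (3 * (Bp + 1))"
    have e: "e > 0" using r Bp0 by (simp add: e_def)
    have eBp: "e * Bp < r / 3" using r Bp0 by (simp add: e_def field_simps)
    obtain C where C: "\<And>u v::real. \<bar>\<bar>u + v\<bar> powr p - \<bar>v\<bar> powr p\<bar> \<le> e * \<bar>v\<bar> powr p + C * \<bar>u\<bar> powr p"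
      using elem_ineq[OF p e] by blast
    define tA where "tA N = (\<Sum>m. if m < N then 0 else A m)" for N
    have "(\<lambda>N. (\<bar>C\<bar> + 1) * tA N) \<longlonglongrightarrow> (\<bar>C\<bar> + 1) * 0"
      unfolding tA_def by (intro tendsto_mult tendsto_const tailA_lim sA)
    then have lt: "(\<lambda>N. (\<bar>C\<bar> + 1) * tA N) \<longlonglongrightarrow> 0" by simp
    have "\<forall>\<^sub>F N in sequentially. (\<bar>C\<bar> + 1) * tA N < r / 3" using r by (intro order_tendstoD(2)[OF lt]) auto
    then obtain N where N: "(\<bar>C\<bar> + 1) * tA N < r / 3" by (auto simp: eventually_sequentially)
    have tA0: "tA N \<ge> 0" unfolding tA_def by (intro suminf_nonneg summable_tl0 sA) (auto simp: A_def)
    have "(\<lambda>n. \<Sum>m<N. F n m - A m) \<longlonglongrightarrow> (\<Sum>m<N. (\<bar>a m + 0\<bar> powr p - \<bar>0\<bar> powr p) - A m)"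
      unfolding F_def using p by (intro tendsto_intros tendsto_powr2 lim) auto
    then have "(\<lambda>n. \<Sum>m<N. F n m - A m) \<longlonglongrightarrow> 0" by (simp add: A_def)
    then have lt2: "(\<lambda>n. \<bar>\<Sum>m<N. F n m - A m\<bar>) \<longlonglongrightarrow> 0" by (simp add: tendsto_rabs_zero)
    have r3: "0 < r / 3" using r by simp
    have "\<forall>\<^sub>F n in sequentially. \<bar>\<Sum>m<N. F n m - A m\<bar> < r / 3" by (rule order_tendstoD(2)[OF lt2 r3])
    then obtain n0 where n0: "\<And>n. n \<ge> n0 \<Longrightarrow> \<bar>\<Sum>m<N. F n m - A m\<bar> < r / 3"
      by (auto simp: eventually_sequentially)
    show "\<exists>n0. \<forall>n\<ge>n0. norm (suminf (F n) - suminf A) < r"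
    proof (intro exI allI impI)
      fix n assume n: "n \<ge> n0"
      define G where "G m = (if m < N then 0 else F n m)" for m
      define H where "H m = e * \<bar>d n m\<bar> powr p + \<bar>C\<bar> * (if m < N then 0 else A m)" for m
      have sG: "summable G" unfolding G_def by (intro summable_tl0 sF)
      have sH: "summable H" unfolding H_def
        by (intro summable_add summable_mult sd summable_tl0 sA)
      have GH: "\<bar>G m\<bar> \<le> H m" for m
      proof (cases "m < N")
        case True then show ?thesis by (simp add: G_def H_def e less_imp_le)
      next
        case False
        have "\<bar>G m\<bar> \<le> e * \<bar>d n m\<bar> powr p + C * \<bar>a m\<bar> powr p"
          using C[of "a m" "d n m"] False by (simp add: G_def F_def)
        also have "\<dots> \<le> H m" using False
          by (simp add: H_def A_def mult_right_mono)
        finally show ?thesis .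
      qed
      have "\<bar>suminf G\<bar> \<le> suminf H"
      proof -
        have "summable (\<lambda>m. \<bar>G m\<bar>)" by (rule summable_comparison_test'[OF sH]) (use GH in auto)
        then have "\<bar>suminf G\<bar> \<le> (\<Sum>m. \<bar>G m\<bar>)" by (rule summable_rabs)
        also have "\<dots> \<le> suminf H" by (rule suminf_le[OF GH]) (use \<open>summable (\<lambda>m. \<bar>G m\<bar>)\<close> sH in auto)
        finally show ?thesis .
      qed
      also have "suminf H = e * (\<Sum>m. \<bar>d n m\<bar> powr p) + \<bar>C\<bar> * tA N"
        unfolding H_def tA_def
        by (subst suminf_add[symmetric]) (auto intro!: summable_mult sd summable_tl0 sA
             simp: suminf_mult[OF sd] suminf_mult[OF summable_tl0[OF sA]])
      also have "\<dots> \<le> e * Bp + \<bar>C\<bar> * tA N" using dB[of n] e by simp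
      finally have tG: "\<bar>suminf G\<bar> \<le> e * Bp + \<bar>C\<bar> * tA N" .
      have splitF: "suminf (F n) = (\<Sum>m<N. F n m) + suminf G"
        unfolding G_def by (rule suminf_split_tl0[OF sF])
      have splitA: "suminf A = (\<Sum>m<N. A m) + tA N"
        unfolding tA_def by (rule suminf_split_tl0[OF sA])
      have "suminf (F n) - suminf A = (\<Sum>m<N. F n m - A m) + suminf G - tA N"
        using splitF splitA by (simp add: sum_subtractf)
      then have "\<bar>suminf (F n) - suminf A\<bar> \<le> \<bar>\<Sum>m<N. F n m - A m\<bar> + \<bar>suminf G\<bar> + tA N"
        using tA0 by linarith
      also have "\<dots> < r / 3 + (e * Bp + \<bar>C\<bar> * tA N) + tA N" using n0[OF n] tG by linarith
      also have "\<dots> \<le> r" using eBp N by (simp add: algebra_simps)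
      finally show "norm (suminf (F n) - suminf A) < r" by simp
    qed
  qed
  then show ?thesis using eqF by (simp add: A_def)
qed

lemma fscale_0[simp]: "fscale 0 x = 0" by (simp add: fscale_def fun_eq_iff)
lemma fscale_m1: "fscale (-1) x = - x" by (simp add: fscale_def fun_eq_iff)

context
  fixes p :: real and T :: "(nat \<Rightarrow> real) \<Rightarrow> (nat \<Rightarrow> real)"
  assumes T: "T \<in> Lop p" and p1: "1 < p"
begin

lemma lop_add: "x \<in> lp p \<Longrightarrow> y \<in> lp p \<Longrightarrow> T (x + y) = T x + T y"
  using T by (simp add: Lop_def)
lemma lop_scale: "x \<in> lp p \<Longrightarrow> T (fscale c x) = fscale c (T x)"
  using T by (simp add: Lop_def)
lemma lop_in: "x \<in> lp p \<Longrightarrow> T x \<in> lp p"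
  using T by (simp add: Lop_def)
lemma lop_out: "x \<notin> lp p \<Longrightarrow> T x = 0"
  using T by (simp add: Lop_def)
lemma lop_zero: "T 0 = 0"
  using lop_scale[of 0 0] by simp
lemma lop_uminus: "x \<in> lp p \<Longrightarrow> T (- x) = - T x"
  using lop_scale[of x "-1"] by (simp add: fscale_m1)
lemma lop_diff: "x \<in> lp p \<Longrightarrow> y \<in> lp p \<Longrightarrow> T (x - y) = T x - T y"
  using lop_add[of x "- y"] lop_uminus[of y] lp_uminus[of y p] by simp

lemma lop_bdd: "bdd_above ((\<lambda>x. lpnorm p (T x)) ` {x \<in> lp p. lpnorm p x \<le> 1})"
proof -
  obtain C where C: "\<And>x. x \<in> lp p \<Longrightarrow> lpnorm p (T x) \<le> C * lpnorm p x"
    using T unfolding Lop_def by blast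
  have "lpnorm p (T x) \<le> max C 0" if "x \<in> lp p" "lpnorm p x \<le> 1" for x
  proof -
    have "C * lpnorm p x \<le> max C 0 * lpnorm p x"
      using lpnorm_nonneg[of p x] by (intro mult_right_mono) auto
    also have "\<dots> \<le> max C 0 * 1" using that by (intro mult_left_mono) auto
    finally have "C * lpnorm p x \<le> max C 0 * 1" .
    then show ?thesis using C[OF that(1)] by simp
  qed
  then show ?thesis by (auto intro!: bdd_aboveI)
qed

lemma opnorm_ge: "x \<in> lp p \<Longrightarrow> lpnorm p x \<le> 1 \<Longrightarrow> lpnorm p (T x) \<le> opnorm p T"
  unfolding opnorm_def by (rule cSup_upper[OF _ lop_bdd]) auto

lemma opnorm_nonneg: "0 \<le> opnorm p T"
  using opnorm_ge[of 0] lpnorm_nonneg[of p "T 0"] by simp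

lemma opnorm_bound: assumes x: "x \<in> lp p" shows "lpnorm p (T x) \<le> opnorm p T * lpnorm p x"
proof (cases "lpnorm p x = 0")
  case True
  then have "x = 0" using lpnorm_eq_0[OF x] p1 by simp
  then show ?thesis by (simp add: lop_zero)
next
  case False
  define n where "n = lpnorm p x"
  have n: "n > 0" using False lpnorm_nonneg[of p x] by (simp add: n_def)
  have y: "fscale (1/n) x \<in> lp p" by (rule lp_scale[OF x])
  have "lpnorm p (fscale (1/n) x) = 1"
    using lpnorm_scale[OF x, of "1/n"] p1 n by (simp add: n_def)
  then have "lpnorm p (T (fscale (1/n) x)) \<le> opnorm p T" using opnorm_ge[OF y] by simp
  moreover have "lpnorm p (T (fscale (1/n) x)) = lpnorm p (T x) / n"
    using lop_scale[OF x] lpnorm_scale[OF lop_in[OF x], of "1/n"] p1 n by simp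
  ultimately show ?thesis using n by (simp add: n_def field_simps)
qed

lemma opnorm_attain: assumes "c < opnorm p T"
  shows "\<exists>x\<in>lp p. lpnorm p x \<le> 1 \<and> c < lpnorm p (T x)"
proof -
  have ne: "{x \<in> lp p. lpnorm p x \<le> 1} \<noteq> {}" using lp_zero[of p] by (metis (mono_tags, lifting) empty_iff lpnorm_0 mem_Collect_eq zero_less_one less_imp_le)
  show ?thesis using assms unfolding opnorm_def
    using less_cSup_iff[OF _ lop_bdd, of c] ne by auto
qed

lemma coord_lin: "x \<in> lp p \<Longrightarrow> \<bar>T x m\<bar> \<le> opnorm p T * lpnorm p x"
  using coord_le[OF lop_in p1[THEN less_trans[OF zero_less_one]], of x m] opnorm_bound[of x] by linarith

end

lemma opnorm_least:
  assumes "\<And>x. x \<in> lp p \<Longrightarrow> lpnorm p x \<le> 1 \<Longrightarrow> lpnorm p (T x) \<le> c"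
  shows "opnorm p T \<le> c"
proof -
  have ne: "{x \<in> lp p. lpnorm p x \<le> 1} \<noteq> {}" using lp_zero[of p] by (metis (mono_tags, lifting) empty_iff lpnorm_0 mem_Collect_eq zero_less_one less_imp_le)
  show ?thesis unfolding opnorm_def by (rule cSup_least) (use ne assms in auto)
qed

lemma Lop_add: assumes S: "S \<in> Lop p" and T: "T \<in> Lop p" and p: "1 < p" shows "S + T \<in> Lop p"
proof -
  have b: "lpnorm p ((S + T) x) \<le> (opnorm p S + opnorm p T) * lpnorm p x" if x: "x \<in> lp p" for x
  proof -
    have "lpnorm p ((S + T) x) \<le> lpnorm p (S x) + lpnorm p (T x)"
      using minkowski'[OF p lop_in[OF S p x] lop_in[OF T p x]] by simp
    also have "\<dots> \<le> opnorm p S * lpnorm p x + opnorm p T * lpnorm p x"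
      by (intro add_mono opnorm_bound[OF S p x] opnorm_bound[OF T p x])
    finally show ?thesis by (simp add: algebra_simps)
  qed
  then have b': "\<exists>C. \<forall>x\<in>lp p. lpnorm p ((S + T) x) \<le> C * lpnorm p x" by blast
  show ?thesis unfolding Lop_def using b'
    using lop_add[OF S p] lop_add[OF T p] lop_scale[OF S p] lop_scale[OF T p]
      lop_out[OF S p] lop_out[OF T p] lp_add[OF lop_in[OF S p] lop_in[OF T p]] p b
    by (auto simp: fscale_def fun_eq_iff algebra_simps)
qed

lemma Lop_scale: assumes S: "S \<in> Lop p" and p: "1 < p" shows "(\<lambda>x. fscale c (S x)) \<in> Lop p"
proof -
  have b: "lpnorm p (fscale c (S x)) \<le> (\<bar>c\<bar> * opnorm p S) * lpnorm p x" if x: "x \<in> lp p" for x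
    using lpnorm_scale[OF lop_in[OF S p x], of c] p opnorm_bound[OF S p x]
    by (simp add: mult.assoc mult_left_mono)
  then have b': "\<exists>C. \<forall>x\<in>lp p. lpnorm p (fscale c (S x)) \<le> C * lpnorm p x" by blast
  show ?thesis unfolding Lop_def using b'
    using lop_add[OF S p] lop_scale[OF S p] lop_out[OF S p] lp_scale[OF lop_in[OF S p]] b
    by (auto simp: fscale_def fun_eq_iff algebra_simps)
qed

lemma Lop_uminus: assumes S: "S \<in> Lop p" and p: "1 < p" shows "- S \<in> Lop p"
proof -
  have "- S = (\<lambda>x. fscale (-1) (S x))" by (simp add: fun_eq_iff fscale_def)
  then show ?thesis using Lop_scale[OF S p] by simp
qed

lemma Lop_diff: assumes S: "S \<in> Lop p" and T: "T \<in> Lop p" and p: "1 < p" shows "S - T \<in> Lop p"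
  using Lop_add[OF S Lop_uminus[OF T p] p] by (simp only: diff_conv_add_uminus)

lemma Lop_zero: "(0 :: (nat \<Rightarrow> real) \<Rightarrow> (nat \<Rightarrow> real)) \<in> Lop p"
proof -
  have f: "fscale c (0::nat\<Rightarrow>real) = 0" for c by (simp add: fscale_def zero_fun_def)
  have b: "\<exists>C. \<forall>x\<in>lp p. lpnorm p ((0 :: (nat \<Rightarrow> real) \<Rightarrow> (nat \<Rightarrow> real)) x) \<le> C * lpnorm p x"
    by (rule exI[of _ 0]) simp
  show ?thesis unfolding Lop_def using f b by simp
qed

lemma opnorm_add: assumes S: "S \<in> Lop p" and T: "T \<in> Lop p" and p: "1 < p"
  shows "opnorm p (S + T) \<le> opnorm p S + opnorm p T"
proof (rule opnorm_least)
  fix x assume x: "x \<in> lp p" "lpnorm p x \<le> 1"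
  have "lpnorm p ((S + T) x) \<le> lpnorm p (S x) + lpnorm p (T x)"
    using minkowski'[OF p lop_in[OF S p x(1)] lop_in[OF T p x(1)]] by simp
  also have "\<dots> \<le> opnorm p S + opnorm p T"
    by (intro add_mono opnorm_ge[OF S p x] opnorm_ge[OF T p x])
  finally show "lpnorm p ((S + T) x) \<le> opnorm p S + opnorm p T" .
qed

lemma opnorm_scale_le: assumes S: "S \<in> Lop p" and p: "1 < p"
  shows "opnorm p (\<lambda>x. fscale c (S x)) \<le> \<bar>c\<bar> * opnorm p S"
proof (rule opnorm_least)
  fix x assume x: "x \<in> lp p" "lpnorm p x \<le> 1"
  show "lpnorm p (fscale c (S x)) \<le> \<bar>c\<bar> * opnorm p S"
    using lpnorm_scale[OF lop_in[OF S p x(1)], of c] p opnorm_ge[OF S p x]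
    by (simp add: mult_left_mono)
qed

definition ee :: "nat \<Rightarrow> nat \<Rightarrow> real" where "ee j = (\<lambda>n. if n = j then 1 else 0)"

lemma lp_finsupp: assumes "\<And>n. n \<ge> N \<Longrightarrow> g n = 0" and "p > 0" shows "g \<in> lp p"
proof -
  have "summable (\<lambda>n. \<bar>g n\<bar> powr p)"
    by (rule summable_finite[of "{..<N}"]) (use assms in auto)
  then show ?thesis by (simp add: lp_def)
qed

lemma lp_hdN_any: "p > 0 \<Longrightarrow> hdN N g \<in> lp p"
  by (rule lp_finsupp[of N]) (auto simp: hdN_def)

lemma lp_ee: "p > 0 \<Longrightarrow> ee j \<in> lp p"
  by (rule lp_finsupp[of "Suc j"]) (auto simp: ee_def)

lemma hdN_Suc: "hdN (Suc N) x = hdN N x + fscale (x N) (ee N)"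
  by (auto simp: hdN_def ee_def fun_eq_iff less_Suc_eq)

lemma T_hdN: assumes T: "T \<in> Lop p" and p: "1 < p"
  shows "T (hdN N x) m = (\<Sum>j<N. T (ee j) m * x j)"
proof (induction N)
  case 0
  have "hdN 0 x = 0" by (simp add: hdN_def fun_eq_iff)
  then have "T (hdN 0 x) = 0" using lop_zero[OF T p] by simp
  then show ?case by simp
next
  case (Suc N)
  have p0: "p > 0" using p by simp
  have "T (hdN (Suc N) x) = T (hdN N x) + fscale (x N) (T (ee N))"
    unfolding hdN_Suc using lop_add[OF T p lp_hdN_any[OF p0] lp_scale[OF lp_ee[OF p0]]] lop_scale[OF T p lp_ee[OF p0]]
    by simp
  then show ?case using Suc by (simp add: mult.commute)
qed

lemma hdN_lpnorm: "p > 0 \<Longrightarrow> lpnorm p (hdN N g) = (\<Sum>j<N. \<bar>g j\<bar> powr p) powr (1/p)"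
  unfolding lpnorm_def hdN_def by (subst suminf_finite[of "{..<N}"]) auto

lemma coord_rep:
  assumes T: "T \<in> Lop p" and c: "conj p q"
  shows "(\<lambda>j. T (ee j) m) \<in> lp q \<and> (\<forall>x\<in>lp p. T x m = pair (\<lambda>j. T (ee j) m) x)"
proof -
  have p: "1 < p" and q: "1 < q" and p0: "p > 0" and q0: "q > 0" using c by (auto simp: conj_def)
  define cc where "cc j = T (ee j) m" for j
  define M where "M = opnorm p T"
  define g where "g j = sgn (cc j) * \<bar>cc j\<bar> powr (q - 1)" for j
  define A where "A N = (\<Sum>j<N. \<bar>cc j\<bar> powr q)" for N
  have A0: "A N \<ge> 0" for N by (simp add: A_def sum_nonneg)
  have cg: "cc j * g j = \<bar>cc j\<bar> powr q" for j
  proof (cases "cc j = 0")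
    case True then show ?thesis by (simp add: g_def)
  next
    case False
    have sa: "sgn (cc j) * cc j = \<bar>cc j\<bar>" by (simp add: sgn_if)
    have "cc j * g j = (sgn (cc j) * cc j) * \<bar>cc j\<bar> powr (q - 1)" by (simp add: g_def)
    also have "\<dots> = \<bar>cc j\<bar> * \<bar>cc j\<bar> powr (q - 1)" by (simp only: sa)
    also have "\<dots> = \<bar>cc j\<bar> powr q" using False by (simp add: powr_diff)
    finally show ?thesis .
  qed
  have gp: "\<bar>g j\<bar> powr p = \<bar>cc j\<bar> powr q" for j
  proof -
    have "\<bar>g j\<bar> = \<bar>cc j\<bar> powr (q - 1)" by (simp add: g_def abs_mult abs_sgn_eq)
    then show ?thesis using conj_mult[OF conj_sym[OF c]] by (simp add: powr_powr)
  qed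
  have bnd: "A N \<le> M powr q" for N
  proof -
    have TA: "T (hdN N g) m = A N" unfolding T_hdN[OF T p] A_def cc_def[symmetric] using cg by simp
    have nA: "lpnorm p (hdN N g) = A N powr (1/p)" unfolding hdN_lpnorm[OF p0] A_def gp ..
    have le: "A N \<le> M * A N powr (1/p)"
      using coord_lin[OF T p lp_hdN_any[OF p0], of N g m] TA nA A0[of N] by (simp add: M_def)
    show ?thesis
    proof (cases "A N = 0")
      case True then show ?thesis by simp
    next
      case False
      then have Ap: "A N > 0" using A0[of N] by simp
      have "A N = A N powr (1/p) * A N powr (1/q)"
        using Ap c by (simp add: powr_add[symmetric] conj_def)
      then have "A N powr (1/p) * A N powr (1/q) \<le> A N powr (1/p) * M" using le by (simp add: mult.commute)
      then have "A N powr (1/q) \<le> M" using Ap by simp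
      then have "(A N powr (1/q)) powr q \<le> M powr q" using q0 by (intro powr_mono2) auto
      then show ?thesis using Ap q0 by (simp add: powr_powr)
    qed
  qed
  have scc: "summable (\<lambda>j. \<bar>cc j\<bar> powr q)"
    by (rule summableI_nonneg_bounded[where x="M powr q"]) (use bnd in \<open>auto simp: A_def\<close>)
  then have ccq: "cc \<in> lp q" by (simp add: lp_def)
  have rep: "T x m = pair cc x" if x: "x \<in> lp p" for x
  proof -
    have "(\<lambda>N. T (tlN N x) m) \<longlonglongrightarrow> 0"
    proof (rule Lim_null_comparison)
      show "\<forall>\<^sub>F N in sequentially. norm (T (tlN N x) m) \<le> M * lpnorm p (tlN N x)"
        using coord_lin[OF T p lp_tlN[OF x]] by (simp add: M_def)
      show "(\<lambda>N. M * lpnorm p (tlN N x)) \<longlonglongrightarrow> 0"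
        using tendsto_mult[OF tendsto_const tl_norm_lim[OF x p0], of M] by simp
    qed
    moreover have "T (hdN N x) m = T x m - T (tlN N x) m" for N
      using lop_add[OF T p lp_hdN[OF x] lp_tlN[OF x]] hd_tl[of x N] by (metis add_diff_cancel_right' plus_fun_apply)
    ultimately have l1: "(\<lambda>N. T (hdN N x) m) \<longlonglongrightarrow> T x m - 0"
      by (simp only:) (intro tendsto_diff tendsto_const)
    have l2: "(\<lambda>N. T (hdN N x) m) \<longlonglongrightarrow> pair cc x"
      unfolding T_hdN[OF T p] cc_def[symmetric] pair_def
      by (rule summable_LIMSEQ[OF pair_summable[OF c x ccq]])
    show ?thesis using LIMSEQ_unique[OF l1 l2] by simp
  qed
  show ?thesis using ccq rep by (simp add: cc_def[abs_def])
qed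

lemma coord_conv:
  assumes T: "T \<in> Lop p" and p: "1 < p" and d: "\<And>n. d n \<in> lp p" "\<And>n. lpnorm p (d n) \<le> B"
    and z: "z \<in> lp p" and lim: "\<And>m. (\<lambda>n. d n m) \<longlonglongrightarrow> z m"
  shows "(\<lambda>n. T (d n) m) \<longlonglongrightarrow> T z m"
proof -
  define q where "q = p / (p - 1)"
  have c: "conj p q" using conj_exists[OF p] by (simp add: q_def)
  note R = coord_rep[OF T c, of m]
  have "(\<lambda>k. pair (d k) (\<lambda>j. T (ee j) m)) \<longlonglongrightarrow> pair z (\<lambda>j. T (ee j) m)"
    by (rule pair_conv[OF conj_sym[OF c] conjunct1[OF R] d z lim])
  then show ?thesis using R d(1) z by (simp add: pair_commute)
qed

lemma fscale_fscale: "fscale a (fscale b x) = fscale (a * b) x"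
  by (simp add: fscale_def fun_eq_iff)

lemma fscale_1: "fscale 1 x = x" by (simp add: fscale_def)

lemma lim_coord_of_norm:
  assumes p: "p > 0" and u: "\<And>n. u n \<in> lp p" and y: "y \<in> lp p"
    and lim: "(\<lambda>n. lpnorm p (u n - y)) \<longlonglongrightarrow> 0"
  shows "(\<lambda>n. u n m) \<longlonglongrightarrow> y m"
proof -
  have "(\<lambda>n. u n m - y m) \<longlonglongrightarrow> 0"
  proof (rule Lim_null_comparison[OF _ lim])
    show "\<forall>\<^sub>F n in sequentially. norm (u n m - y m) \<le> lpnorm p (u n - y)"
      using coord_le[OF lp_diff[OF u y p] p] by simp
  qed
  then show ?thesis by (rule LIM_zero_cancel)
qed

lemma compact_sub:
  assumes K: "K \<in> Kop p" and p: "1 < p" and d: "\<And>n. d n \<in> lp p" "\<And>n. lpnorm p (d n) \<le> B"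
    and lim: "\<And>m. (\<lambda>n. d n m) \<longlonglongrightarrow> 0"
  shows "\<exists>r. strict_mono r \<and> (\<lambda>n. lpnorm p (K (d (r n)))) \<longlonglongrightarrow> 0"
proof -
  have p0: "p > 0" using p by simp
  have KL: "K \<in> Lop p" using K by (simp add: Kop_def)
  define B' where "B' = max B 1"
  have B': "B' > 0" "B' \<ge> B" by (auto simp: B'_def)
  define s where "s n = fscale (1/B') (d n)" for n
  have s: "s n \<in> lp p" for n by (simp add: s_def lp_scale d)
  have sn: "lpnorm p (s n) \<le> 1" for n
  proof -
    have "lpnorm p (s n) = lpnorm p (d n) / B'" using lpnorm_scale[OF d(1) p0, of "1/B'" n] B' by (simp add: s_def)
    also have "\<dots> \<le> 1" using d(2)[of n] B' by simp
    finally show ?thesis .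
  qed
  obtain r y where r: "strict_mono r" and y: "y \<in> lp p" and ly: "(\<lambda>n. lpnorm p (K (s (r n)) - y)) \<longlonglongrightarrow> 0"
    using K s sn unfolding Kop_def by blast
  have sl: "(\<lambda>n. s (r n) m) \<longlonglongrightarrow> 0" for m
  proof -
    have "(\<lambda>n. d (r n) m) \<longlonglongrightarrow> 0" using LIMSEQ_subseq_LIMSEQ[OF lim r] by (simp add: o_def)
    then have "(\<lambda>n. (1/B') * d (r n) m) \<longlonglongrightarrow> (1/B') * 0" by (intro tendsto_mult tendsto_const)
    then show ?thesis by (simp add: s_def)
  qed
  have y0: "y = 0"
  proof
    fix m
    have "(\<lambda>n. K (s (r n)) m) \<longlonglongrightarrow> K 0 m"
      by (rule coord_conv[OF KL p s sn lp_zero]) (use sl in simp)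
    then have a: "(\<lambda>n. K (s (r n)) m) \<longlonglongrightarrow> 0" using lop_zero[OF KL p] by simp
    have b: "(\<lambda>n. K (s (r n)) m) \<longlonglongrightarrow> y m"
      by (rule lim_coord_of_norm[OF p0 lop_in[OF KL p s] y ly])
    show "y m = 0 m" using LIMSEQ_unique[OF b a] by simp
  qed
  have eq: "lpnorm p (K (d (r n))) = B' * lpnorm p (K (s (r n)))" for n
  proof -
    have "d (r n) = fscale B' (s (r n))" using B' by (simp add: s_def fscale_fscale fscale_1)
    then have "K (d (r n)) = fscale B' (K (s (r n)))" using lop_scale[OF KL p s] by simp
    then show ?thesis using lpnorm_scale[OF lop_in[OF KL p s] p0] B' by simp
  qed
  have "(\<lambda>n. B' * lpnorm p (K (s (r n)))) \<longlonglongrightarrow> B' * 0"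
    using ly y0 by (intro tendsto_mult tendsto_const) simp
  then show ?thesis using r eq by auto
qed

lemma Kop_zero: "(0 :: (nat \<Rightarrow> real) \<Rightarrow> (nat \<Rightarrow> real)) \<in> Kop p"
proof -
  have "\<exists>(r::nat \<Rightarrow> nat) y. strict_mono r \<and> y \<in> lp p \<and>
          (\<lambda>n. lpnorm p ((0 :: (nat \<Rightarrow> real) \<Rightarrow> (nat \<Rightarrow> real)) (s (r n)) - y)) \<longlonglongrightarrow> 0" for s :: "nat \<Rightarrow> nat \<Rightarrow> real"
    by (rule exI[of _ id], rule exI[of _ 0]) (simp add: strict_mono_def)
  then show ?thesis unfolding Kop_def using Lop_zero by blast
qed

lemma dist_K: assumes "dist_Kop p T < c"
  shows "\<exists>K\<in>Kop p. opnorm p (T - K) < c"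
proof -
  have "(\<lambda>K. opnorm p (T - K)) ` Kop p \<noteq> {}" using Kop_zero by blast
  from cInf_lessD[OF this] assms show ?thesis unfolding dist_Kop_def by blast
qed

lemma pow_root: "x \<ge> 0 \<Longrightarrow> p > 0 \<Longrightarrow> (x powr p) powr (1/p) = x" for x p :: real
  by (simp add: powr_powr)

lemma stepA:
  fixes Z :: "nat \<Rightarrow> nat \<Rightarrow> real"
  assumes T: "T \<in> Lop p" and p: "1 < p" and nT: "opnorm p T = 1" and dK: "dist_Kop p T < 1"
    and Z: "\<And>n. Z n \<in> lp p" "\<And>n. lpnorm p (Z n) \<le> 1"
    and lT: "(\<lambda>n. lpnorm p (T (Z n))) \<longlonglongrightarrow> 1"
  shows "\<exists>r z. strict_mono r \<and> z \<in> MT p T \<and> (\<lambda>n. lpnorm p (Z (r n) - z)) \<longlonglongrightarrow> 0"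
proof -
  have p0: "p > 0" using p by simp
  obtain r1 z where r1: "strict_mono r1" and z: "z \<in> lp p" and nz: "lpnorm p z \<le> 1"
    and cz: "\<And>m. (\<lambda>n. Z (r1 n) m) \<longlonglongrightarrow> z m"
    using weak_compact[of p Z, OF p0 Z(1) Z(2)] by blast
  obtain K where K: "K \<in> Kop p" and al: "opnorm p (T - K) < 1" using dist_K[OF dK] by blast
  have KL: "K \<in> Lop p" using K by (simp add: Kop_def)
  define R where "R = T - K"
  have RL: "R \<in> Lop p" unfolding R_def by (rule Lop_diff[OF T KL p])
  define \<alpha> where "\<alpha> = opnorm p R"
  have \<alpha>: "0 \<le> \<alpha>" "\<alpha> < 1" using al opnorm_nonneg[OF RL p] by (auto simp: \<alpha>_def R_def)
  define d where "d n = Z (r1 n) - z" for n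
  have d_lp: "d n \<in> lp p" for n unfolding d_def by (rule lp_diff[OF Z(1) z p0])
  have d_bd: "lpnorm p (d n) \<le> 2" for n
    using minkowski'[OF p Z(1)[of "r1 n"] lp_uminus[OF z]] Z(2)[of "r1 n"] nz by (simp add: d_def)
  have d_lim: "(\<lambda>n. d n m) \<longlonglongrightarrow> 0" for m
    using tendsto_diff[OF cz[of m] tendsto_const[of "z m"]] by (simp add: d_def)
  obtain r2 where r2: "strict_mono r2" and lK: "(\<lambda>n. lpnorm p (K (d (r2 n)))) \<longlonglongrightarrow> 0"
    using compact_sub[OF K p d_lp d_bd d_lim] by blast
  obtain r3 where r3: "strict_mono r3" and mono: "monoseq (\<lambda>n. lpnorm p (d (r2 (r3 n))))"
    using seq_monosub[of "\<lambda>n. lpnorm p (d (r2 n))"] by blast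
  have nb: "norm (lpnorm p (d (r2 (r3 n)))) \<le> 2" for n
    using d_bd[of "r2 (r3 n)"] lpnorm_nonneg[of p "d (r2 (r3 n))"] by simp
  have "Bseq (\<lambda>n. lpnorm p (d (r2 (r3 n))))" using nb by (rule BseqI')
  then have "convergent (\<lambda>n. lpnorm p (d (r2 (r3 n))))" using mono by (rule Bseq_monoseq_convergent)
  then obtain \<delta> where lD: "(\<lambda>n. lpnorm p (d (r2 (r3 n)))) \<longlonglongrightarrow> \<delta>"
    unfolding convergent_def by blast
  define r where "r = r1 \<circ> r2 \<circ> r3"
  have r: "strict_mono r" unfolding r_def by (intro strict_mono_o r1 r2 r3)
  define D where "D n = d (r2 (r3 n))" for n
  have r23: "strict_mono (r2 \<circ> r3)" by (intro strict_mono_o r2 r3)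
  have D_lp: "D n \<in> lp p" for n by (simp add: D_def d_lp)
  have D_bd: "lpnorm p (D n) \<le> 2" for n by (simp add: D_def d_bd)
  have D_lim: "(\<lambda>n. D n m) \<longlonglongrightarrow> 0" for m
    using LIMSEQ_subseq_LIMSEQ[OF d_lim r23] by (simp add: D_def o_def)
  have lKD: "(\<lambda>n. lpnorm p (K (D n))) \<longlonglongrightarrow> 0"
    using LIMSEQ_subseq_LIMSEQ[OF lK r3] by (simp add: D_def o_def)
  have lD': "(\<lambda>n. lpnorm p (D n)) \<longlonglongrightarrow> \<delta>" using lD by (simp add: D_def)
  have lTZ: "(\<lambda>n. lpnorm p (T (Z (r n)))) \<longlonglongrightarrow> 1"
    using LIMSEQ_subseq_LIMSEQ[OF lT r] by (simp add: o_def)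
  have ZD: "Z (r n) = z + D n" for n by (simp add: D_def d_def r_def)
  have BL1: "(\<lambda>n. lpnorm p (Z (r n)) powr p - lpnorm p (D n) powr p) \<longlonglongrightarrow> lpnorm p z powr p"
  proof -
    have "(\<lambda>n. (\<Sum>m. \<bar>z m + D n m\<bar> powr p) - (\<Sum>m. \<bar>D n m\<bar> powr p)) \<longlonglongrightarrow> (\<Sum>m. \<bar>z m\<bar> powr p)"
      by (rule brezis_lieb[OF p0 z D_lp D_bd D_lim])
    moreover have "(\<Sum>m. \<bar>z m + D n m\<bar> powr p) = lpnorm p (Z (r n)) powr p" for n
      using lpnorm_powr[OF Z(1) p0, of "r n"] by (simp add: ZD)
    moreover have "(\<Sum>m. \<bar>D n m\<bar> powr p) = lpnorm p (D n) powr p" for n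
      using lpnorm_powr[OF D_lp p0] by simp
    ultimately show ?thesis using lpnorm_powr[OF z p0] by simp
  qed
  define TD where "TD n = T (D n)" for n
  have TD_lp: "TD n \<in> lp p" for n by (simp add: TD_def lop_in[OF T p D_lp])
  have TD_bd: "lpnorm p (TD n) \<le> 2" for n
    using opnorm_bound[OF T p D_lp, of n] D_bd[of n] nT by (simp add: TD_def)
  have TD_lim: "(\<lambda>n. TD n m) \<longlonglongrightarrow> 0" for m
  proof -
    have "(\<lambda>n. T (D n) m) \<longlonglongrightarrow> T 0 m"
      by (rule coord_conv[OF T p D_lp D_bd lp_zero]) (simp add: D_lim)
    then show ?thesis by (simp add: TD_def lop_zero[OF T p])
  qed
  have TZ: "T (Z (r n)) = T z + TD n" for n
    using lop_add[OF T p z D_lp] by (simp add: ZD TD_def)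
  have BL2: "(\<lambda>n. lpnorm p (T (Z (r n))) powr p - lpnorm p (TD n) powr p) \<longlonglongrightarrow> lpnorm p (T z) powr p"
  proof -
    have "(\<lambda>n. (\<Sum>m. \<bar>T z m + TD n m\<bar> powr p) - (\<Sum>m. \<bar>TD n m\<bar> powr p)) \<longlonglongrightarrow> (\<Sum>m. \<bar>T z m\<bar> powr p)"
      by (rule brezis_lieb[OF p0 lop_in[OF T p z] TD_lp TD_bd TD_lim])
    moreover have "(\<Sum>m. \<bar>T z m + TD n m\<bar> powr p) = lpnorm p (T (Z (r n))) powr p" for n
      using lpnorm_powr[OF lop_in[OF T p Z(1)] p0, of "r n"] by (simp add: TZ)
    moreover have "(\<Sum>m. \<bar>TD n m\<bar> powr p) = lpnorm p (TD n) powr p" for n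
      using lpnorm_powr[OF TD_lp p0] by simp
    ultimately show ?thesis using lpnorm_powr[OF lop_in[OF T p z] p0] by simp
  qed
  define a where "a = lpnorm p z"
  define tz where "tz = lpnorm p (T z)"
  have a0: "0 \<le> a" "a \<le> 1" using nz lpnorm_nonneg by (auto simp: a_def)
  have tz0: "0 \<le> tz" "tz \<le> a" using opnorm_bound[OF T p z] nT lpnorm_nonneg by (auto simp: a_def tz_def)
  have l3: "(\<lambda>n. lpnorm p (T (Z (r n))) powr p) \<longlonglongrightarrow> 1 powr p"
    using p0 by (intro tendsto_powr2 lTZ tendsto_const) (auto simp: lpnorm_nonneg)
  have l4: "(\<lambda>n. lpnorm p (TD n) powr p) \<longlonglongrightarrow> 1 - tz powr p"
  proof -
    have "(\<lambda>n. lpnorm p (T (Z (r n))) powr p - (lpnorm p (T (Z (r n))) powr p - lpnorm p (TD n) powr p))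
            \<longlonglongrightarrow> 1 powr p - lpnorm p (T z) powr p"
      by (intro tendsto_diff l3 BL2)
    then show ?thesis by (simp add: tz_def)
  qed
  have tzp: "tz powr p \<le> a powr p" using tz0 p0 by (intro powr_mono2) auto
  have ap: "a powr p \<le> 1" using a0 p0 powr_mono2[of p a 1] by auto
  define E where "E = (1 - tz powr p) powr (1/p)"
  have E0: "E \<ge> 0" by (simp add: E_def)
  have Ep: "E powr p = 1 - tz powr p" using tzp ap p0 by (simp add: E_def powr_powr)
  have l5: "(\<lambda>n. lpnorm p (TD n)) \<longlonglongrightarrow> E"
  proof -
    have "(\<lambda>n. (lpnorm p (TD n) powr p) powr (1/p)) \<longlonglongrightarrow> (1 - tz powr p) powr (1/p)"
      using p0 by (intro tendsto_powr2 l4 tendsto_const) auto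
    then show ?thesis using p0 lpnorm_nonneg by (simp add: E_def pow_root)
  qed
  have le: "lpnorm p (TD n) \<le> lpnorm p (K (D n)) + \<alpha> * lpnorm p (D n)" for n
  proof -
    have "TD n = K (D n) + R (D n)" by (simp add: TD_def R_def)
    then have "lpnorm p (TD n) \<le> lpnorm p (K (D n)) + lpnorm p (R (D n))"
      using minkowski'[OF p lop_in[OF KL p D_lp] lop_in[OF RL p D_lp]] by simp
    also have "\<dots> \<le> lpnorm p (K (D n)) + \<alpha> * lpnorm p (D n)"
      using opnorm_bound[OF RL p D_lp] by (simp add: \<alpha>_def)
    finally show ?thesis .
  qed
  have Eal: "E \<le> 0 + \<alpha> * \<delta>"
    by (rule LIMSEQ_le[OF l5 tendsto_add[OF lKD tendsto_mult[OF tendsto_const lD']]]) (use le in auto)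
  have d0: "\<delta> \<ge> 0" by (rule LIMSEQ_le_const[OF lD']) (use lpnorm_nonneg in auto)
  have dp: "\<delta> powr p \<le> 1 - a powr p"
  proof -
    have l6: "(\<lambda>n. lpnorm p (D n) powr p) \<longlonglongrightarrow> \<delta> powr p"
      using p0 by (intro tendsto_powr2 lD' tendsto_const) (auto simp: lpnorm_nonneg)
    have l7: "(\<lambda>n. 1 - (lpnorm p (Z (r n)) powr p - lpnorm p (D n) powr p)) \<longlonglongrightarrow> 1 - a powr p"
      unfolding a_def by (intro tendsto_diff tendsto_const BL1)
    have "lpnorm p (Z (r n)) powr p \<le> 1" for n
      using Z(2)[of "r n"] p0 powr_mono2[of p "lpnorm p (Z (r n))" 1] lpnorm_nonneg by auto
    then show ?thesis by (intro LIMSEQ_le[OF l6 l7]) auto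
  qed
  have Ep2: "E powr p \<le> \<alpha> powr p * \<delta> powr p"
  proof -
    have "E powr p \<le> (\<alpha> * \<delta>) powr p" using Eal E0 p0 by (intro powr_mono2) auto
    then show ?thesis using \<alpha> d0 by (simp add: powr_mult)
  qed
  have alp: "\<alpha> powr p < 1"
  proof (cases "\<alpha> = 0")
    case True then show ?thesis by simp
  next
    case False then show ?thesis using \<alpha> p0 powr01_less_one[of \<alpha> p] by simp
  qed
  have alp0: "\<alpha> powr p \<ge> 0" by simp
  define X where "X = 1 - a powr p"
  have X0: "X \<ge> 0" using ap by (simp add: X_def)
  have "X \<le> \<alpha> powr p * X"
  proof -
    have "X \<le> E powr p" using Ep tzp by (simp add: X_def)
    also have "\<dots> \<le> \<alpha> powr p * \<delta> powr p" by (rule Ep2)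
    also have "\<dots> \<le> \<alpha> powr p * X" using dp alp0 by (intro mult_left_mono) (auto simp: X_def)
    finally show ?thesis .
  qed
  then have "X * (1 - \<alpha> powr p) \<le> 0" by (simp add: algebra_simps)
  then have X: "X = 0" using X0 alp by (simp add: mult_le_0_iff)
  then have apow: "a powr p = 1" by (simp add: X_def)
  have a1: "a = 1" using pow_root[OF a0(1) p0] apow by simp
  have "\<delta> powr p = 0" using dp X d0 by (simp add: X_def)
  then have dz: "\<delta> = 0" by simp
  have "E powr p \<le> 0" using Ep2 dz p0 by simp
  then have "tz powr p \<ge> 1" using Ep by simp
  moreover have "tz powr p \<le> 1" using tzp apow by simp
  ultimately have "tz powr p = 1" by simp
  then have tz1: "tz = 1" using pow_root[OF tz0(1) p0] by simp
  have zM: "z \<in> MT p T" using z a1 tz1 nT by (simp add: MT_def a_def tz_def)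
  have "(\<lambda>n. lpnorm p (Z (r n) - z)) \<longlonglongrightarrow> 0"
    using lD' dz by (simp add: ZD)
  then show ?thesis using r zM by blast
qed

lemma phi_tendsto:
  fixes t :: "nat \<Rightarrow> real"
  assumes p: "1 < p" and lim: "t \<longlonglongrightarrow> L"
  shows "(\<lambda>n. sgn (t n) * \<bar>t n\<bar> powr (p - 1)) \<longlonglongrightarrow> sgn L * \<bar>L\<bar> powr (p - 1)"
proof (cases "L = 0")
  case False
  have "isCont sgn L" using isCont_sgn[where f="\<lambda>x. x" and a=L] False by simp
  then have s: "(\<lambda>n. sgn (t n)) \<longlonglongrightarrow> sgn L" using isCont_tendsto_compose lim by blast
  have a: "(\<lambda>n. \<bar>t n\<bar> powr (p - 1)) \<longlonglongrightarrow> \<bar>L\<bar> powr (p - 1)"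
    using False by (intro tendsto_powr tendsto_rabs lim tendsto_const) auto
  show ?thesis by (rule tendsto_mult[OF s a])
next
  case True
  have ab: "\<bar>sgn (t n) * \<bar>t n\<bar> powr (p - 1)\<bar> = \<bar>t n\<bar> powr (p - 1)" for n
    by (cases "t n = 0") (auto simp: abs_mult abs_sgn_eq)
  have "(\<lambda>n. \<bar>t n\<bar>) \<longlonglongrightarrow> 0" using lim True by (simp add: tendsto_rabs_zero)
  then have "(\<lambda>n. \<bar>t n\<bar> powr (p - 1)) \<longlonglongrightarrow> 0"
    using p by (intro tendsto_zero_powrI[where b="p - 1"] tendsto_const) auto
  then have "(\<lambda>n. \<bar>sgn (t n) * \<bar>t n\<bar> powr (p - 1)\<bar>) \<longlonglongrightarrow> 0" by (simp only: ab)
  then show ?thesis using True by (simp add: tendsto_rabs_zero_cancel)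
qed

lemma stepB:
  fixes z :: "nat \<Rightarrow> nat \<Rightarrow> real" and \<tau> :: "nat \<Rightarrow> real"
  assumes T: "T \<in> Lop p" and p: "1 < p" and nT: "opnorm p T = 1" and S: "S \<in> Lop p"
    and x: "x \<in> MT p T"
    and z: "\<And>n. z n \<in> lp p" "\<And>n. lpnorm p (z n) \<le> 1" and lz: "(\<lambda>n. lpnorm p (z n - x)) \<longlonglongrightarrow> 0"
    and tau: "\<And>n. \<tau> n > 0" "\<tau> \<longlonglongrightarrow> 0" and e: "e > 0"
    and big: "\<And>n. lpnorm p (T (z n) + fscale (\<tau> n) (S (z n))) > 1 + e * \<tau> n"
  shows "pair (Jd p (T x)) (S x) \<ge> e"
proof -
  have p0: "p > 0" using p by simp
  define q where "q = p / (p - 1)"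
  have c: "conj p q" using conj_exists[OF p] by (simp add: q_def)
  have xl: "x \<in> lp p" and nx: "lpnorm p x = 1" and nTx: "lpnorm p (T x) = 1"
    using x nT by (auto simp: MT_def)
  define u where "u n = T (z n) + fscale (\<tau> n) (S (z n))" for n
  have u_lp: "u n \<in> lp p" for n unfolding u_def
    by (intro lp_add lop_in[OF T p] lp_scale lop_in[OF S p] z p0)
  have u0: "u n \<noteq> 0" for n using big[of n] tau(1)[of n] e unfolding u_def[symmetric]
    by (smt (verit) lpnorm_0 mult_pos_pos)
  define w where "w n = Jd p (u n)" for n
  note W = Jd_props[OF c u_lp u0]
  have w_lp: "w n \<in> lp q" and w_n: "lpnorm q (w n) = 1" and wu: "pair (w n) (u n) = lpnorm p (u n)" for n
    using W by (auto simp: w_def)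
  define SZ where "SZ n = S (z n)" for n
  have SZ_lp: "SZ n \<in> lp p" for n by (simp add: SZ_def lop_in[OF S p z(1)])
  have gt: "pair (w n) (SZ n) > e" for n
  proof -
    have "pair (w n) (u n) = pair (w n) (T (z n)) + \<tau> n * pair (w n) (SZ n)"
      unfolding u_def SZ_def
      using pair_add_right[OF c lop_in[OF T p z(1)] lp_scale[OF lop_in[OF S p z(1)]] w_lp]
        pair_scale_right[OF c lop_in[OF S p z(1)] w_lp] by simp
    moreover have "pair (w n) (T (z n)) \<le> 1"
    proof -
      have "pair (w n) (T (z n)) \<le> lpnorm q (w n) * lpnorm p (T (z n))"
        using pair_bound[OF c lop_in[OF T p z(1)[of n]] w_lp[of n]] abs_ge_self[of "pair (w n) (T (z n))"]
        by linarith
      also have "\<dots> \<le> 1 * 1" using w_n opnorm_bound[OF T p z(1), of n] nT z(2)[of n] by simp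
      finally show ?thesis by simp
    qed
    ultimately have "1 + e * \<tau> n < 1 + \<tau> n * pair (w n) (SZ n)"
      using big[of n] wu[of n] by (simp add: u_def)
    then have "\<tau> n * e < \<tau> n * pair (w n) (SZ n)" by (simp add: mult.commute)
    then show ?thesis using tau(1)[of n] by simp
  qed
  have lu: "(\<lambda>n. lpnorm p (u n - T x)) \<longlonglongrightarrow> 0"
  proof (rule Lim_null_comparison)
    show "\<forall>\<^sub>F n in sequentially. norm (lpnorm p (u n - T x)) \<le> lpnorm p (z n - x) + \<tau> n * opnorm p S"
    proof (rule always_eventually, rule allI)
      fix n
      have eq: "u n - T x = T (z n - x) + fscale (\<tau> n) (SZ n)"
        unfolding u_def SZ_def using lop_diff[OF T p z(1) xl] by (simp add: algebra_simps)
      have "lpnorm p (u n - T x) \<le> lpnorm p (T (z n - x)) + lpnorm p (fscale (\<tau> n) (SZ n))"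
        unfolding eq by (rule minkowski'[OF p lop_in[OF T p lp_diff[OF z(1) xl p0]] lp_scale[OF SZ_lp]])
      also have "\<dots> \<le> lpnorm p (z n - x) + \<tau> n * opnorm p S"
      proof (rule add_mono)
        show "lpnorm p (T (z n - x)) \<le> lpnorm p (z n - x)"
          using opnorm_bound[OF T p lp_diff[OF z(1) xl p0]] nT by simp
        have "lpnorm p (SZ n) \<le> opnorm p S"
          using opnorm_bound[OF S p z(1), of n] z(2)[of n] opnorm_nonneg[OF S p]
          by (simp add: SZ_def) (meson mult_left_le order_trans)
        then show "lpnorm p (fscale (\<tau> n) (SZ n)) \<le> \<tau> n * opnorm p S"
          using lpnorm_scale[OF SZ_lp p0] tau(1)[of n] by simp
      qed
      finally show "norm (lpnorm p (u n - T x)) \<le> lpnorm p (z n - x) + \<tau> n * opnorm p S"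
        using lpnorm_nonneg by simp
    qed
    show "(\<lambda>n. lpnorm p (z n - x) + \<tau> n * opnorm p S) \<longlonglongrightarrow> 0"
      using tendsto_add[OF lz tendsto_mult[OF tau(2) tendsto_const]] by simp
  qed
  have nu: "(\<lambda>n. lpnorm p (u n)) \<longlonglongrightarrow> 1"
  proof -
    have "(\<lambda>n. lpnorm p (u n) - lpnorm p (T x)) \<longlonglongrightarrow> 0"
    proof (rule Lim_null_comparison[OF _ lu])
      show "\<forall>\<^sub>F n in sequentially. norm (lpnorm p (u n) - lpnorm p (T x)) \<le> lpnorm p (u n - T x)"
      proof (rule always_eventually, rule allI)
        fix n
        have a: "lpnorm p (u n) \<le> lpnorm p (u n - T x) + lpnorm p (T x)"
          using minkowski'[OF p lp_diff[OF u_lp[of n] lop_in[OF T p xl] p0] lop_in[OF T p xl]] by simp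
        have b: "lpnorm p (T x) \<le> lpnorm p (T x - u n) + lpnorm p (u n)"
          using minkowski'[OF p lp_diff[OF lop_in[OF T p xl] u_lp[of n] p0] u_lp[of n]] by simp
        have "lpnorm p (T x - u n) = lpnorm p (u n - T x)"
          using lpnorm_uminus[of p "u n - T x"] by simp
        then show "norm (lpnorm p (u n) - lpnorm p (T x)) \<le> lpnorm p (u n - T x)" using a b by simp
      qed
    qed
    then show ?thesis using nTx LIM_zero_cancel by fastforce
  qed
  have lw: "(\<lambda>n. w n m) \<longlonglongrightarrow> Jd p (T x) m" for m
  proof -
    have cu: "(\<lambda>n. u n m) \<longlonglongrightarrow> T x m" by (rule lim_coord_of_norm[OF p0 u_lp lop_in[OF T p xl] lu])
    have "(\<lambda>n. sgn (u n m) * \<bar>u n m\<bar> powr (p - 1) / lpnorm p (u n) powr (p - 1))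
            \<longlonglongrightarrow> sgn (T x m) * \<bar>T x m\<bar> powr (p - 1) / 1 powr (p - 1)"
      by (intro tendsto_divide phi_tendsto[OF p cu] tendsto_powr nu tendsto_const) auto
    then show ?thesis by (simp add: w_def Jd_def nTx)
  qed
  have J: "Jd p (T x) \<in> lp q"
    using Jd_props(1)[OF c lop_in[OF T p xl]] nTx by (metis lpnorm_0 zero_neq_one)
  have l1: "(\<lambda>n. pair (w n) (S x)) \<longlonglongrightarrow> pair (Jd p (T x)) (S x)"
    by (rule pair_conv[where B=1, OF c lop_in[OF S p xl] w_lp _ J lw]) (simp add: w_n)
  have l2: "(\<lambda>n. pair (w n) (SZ n) - pair (w n) (S x)) \<longlonglongrightarrow> 0"
  proof (rule Lim_null_comparison)
    show "\<forall>\<^sub>F n in sequentially. norm (pair (w n) (SZ n) - pair (w n) (S x)) \<le> opnorm p S * lpnorm p (z n - x)"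
    proof (rule always_eventually, rule allI)
      fix n
      have "pair (w n) (SZ n) - pair (w n) (S x) = pair (w n) (S (z n - x))"
        using pair_diff_right[OF c SZ_lp lop_in[OF S p xl] w_lp] lop_diff[OF S p z(1) xl] by (simp add: SZ_def)
      moreover have "\<bar>pair (w n) (S (z n - x))\<bar> \<le> lpnorm q (w n) * lpnorm p (S (z n - x))"
        by (rule pair_bound[OF c lop_in[OF S p lp_diff[OF z(1) xl p0]] w_lp])
      moreover have "lpnorm p (S (z n - x)) \<le> opnorm p S * lpnorm p (z n - x)"
        by (rule opnorm_bound[OF S p lp_diff[OF z(1) xl p0]])
      ultimately show "norm (pair (w n) (SZ n) - pair (w n) (S x)) \<le> opnorm p S * lpnorm p (z n - x)"
        using w_n by simp
    qed
    show "(\<lambda>n. opnorm p S * lpnorm p (z n - x)) \<longlonglongrightarrow> 0"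
      using tendsto_mult[OF tendsto_const lz, of "opnorm p S"] by simp
  qed
  have "(\<lambda>n. pair (w n) (SZ n)) \<longlonglongrightarrow> pair (Jd p (T x)) (S x)"
    using tendsto_add[OF l2 l1] by simp
  then show ?thesis by (rule LIMSEQ_le_const) (use gt less_imp_le in blast)
qed

context
  fixes p :: real and f :: "((nat \<Rightarrow> real) \<Rightarrow> (nat \<Rightarrow> real)) \<Rightarrow> real"
  assumes f: "f \<in> Ldual p" and p1: "1 < p"
begin

lemma ld_add: "S \<in> Lop p \<Longrightarrow> T \<in> Lop p \<Longrightarrow> f (S + T) = f S + f T"
  using f by (simp add: Ldual_def)
lemma ld_scale: "S \<in> Lop p \<Longrightarrow> f (\<lambda>x. fscale c (S x)) = c * f S"
  using f by (simp add: Ldual_def)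
lemma ld_out: "S \<notin> Lop p \<Longrightarrow> f S = 0"
  using f by (simp add: Ldual_def)

lemma ld_bdd: "bdd_above ((\<lambda>S. \<bar>f S\<bar>) ` {S \<in> Lop p. opnorm p S \<le> 1})"
proof -
  obtain C where C: "\<And>S. S \<in> Lop p \<Longrightarrow> \<bar>f S\<bar> \<le> C * opnorm p S"
    using f unfolding Ldual_def by blast
  have "\<bar>f S\<bar> \<le> max C 0" if "S \<in> Lop p" "opnorm p S \<le> 1" for S
  proof -
    have "C * opnorm p S \<le> max C 0 * opnorm p S"
      using opnorm_nonneg[OF that(1) p1] by (intro mult_right_mono) auto
    also have "\<dots> \<le> max C 0 * 1" using that by (intro mult_left_mono) auto
    finally show ?thesis using C[OF that(1)] by simp
  qed
  then show ?thesis by (auto intro!: bdd_aboveI)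
qed

lemma dual_ge: "S \<in> Lop p \<Longrightarrow> opnorm p S \<le> 1 \<Longrightarrow> \<bar>f S\<bar> \<le> dualnorm p f"
  unfolding dualnorm_def by (rule cSup_upper[OF _ ld_bdd]) auto

lemma dual_bound: assumes R: "R \<in> Lop p" shows "\<bar>f R\<bar> \<le> dualnorm p f * opnorm p R"
proof (cases "opnorm p R = 0")
  case True
  have "R x = 0" for x
  proof (cases "x \<in> lp p")
    case True
    then have "lpnorm p (R x) \<le> 0" using opnorm_bound[OF R p1 True] \<open>opnorm p R = 0\<close> by simp
    then show ?thesis using lpnorm_eq_0[OF lop_in[OF R p1 True]] p1 lpnorm_nonneg[of p "R x"] by simp
  next
    case False then show ?thesis using lop_out[OF R p1] by simp
  qed
  then have "R = (\<lambda>x. fscale 0 (R x))" by (simp add: fun_eq_iff)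
  then have "f R = 0" using ld_scale[OF R, of 0] by simp
  then show ?thesis using True by simp
next
  case False
  define n where "n = opnorm p R"
  have n: "n > 0" using False opnorm_nonneg[OF R p1] by (simp add: n_def)
  have R': "(\<lambda>x. fscale (1/n) (R x)) \<in> Lop p" by (rule Lop_scale[OF R p1])
  have "opnorm p (\<lambda>x. fscale (1/n) (R x)) \<le> \<bar>1/n\<bar> * n"
    using opnorm_scale_le[OF R p1, of "1/n"] by (simp add: n_def)
  then have "opnorm p (\<lambda>x. fscale (1/n) (R x)) \<le> 1" using n by simp
  then have "\<bar>f (\<lambda>x. fscale (1/n) (R x))\<bar> \<le> dualnorm p f" using dual_ge[OF R'] by simp
  then have "\<bar>f R\<bar> / n \<le> dualnorm p f" using ld_scale[OF R, of "1/n"] n by (simp add: abs_mult)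
  then show ?thesis using n by (simp add: n_def field_simps)
qed

end

lemma upper_le:
  assumes T: "T \<in> Lop p" and p: "1 < p" and nT: "opnorm p T = 1" and dK: "dist_Kop p T < 1"
    and fJ: "f \<in> Jset p T" and S: "S \<in> Lop p"
    and hyp: "\<And>z. z \<in> MT p T \<Longrightarrow> pair (Jd p (T z)) (S z) = 0"
  shows "f S \<le> 0"
proof (rule ccontr)
  assume "\<not> f S \<le> 0"
  then have fS: "f S > 0" by simp
  have p0: "p > 0" using p by simp
  have f: "f \<in> Ldual p" and df: "dualnorm p f = 1" and fT: "f T = 1" using fJ by (auto simp: Jset_def)
  define e where "e = f S / 2"
  have e: "e > 0" using fS by (simp add: e_def)
  define \<tau> where "\<tau> n = inverse (real (Suc n))" for n
  have tau: "\<tau> n > 0" for n by (simp add: \<tau>_def)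
  have ex: "\<exists>Zn. Zn \<in> lp p \<and> lpnorm p Zn \<le> 1 \<and> lpnorm p (T Zn + fscale (\<tau> n) (S Zn)) > 1 + e * \<tau> n" for n
  proof -
    define t where "t = \<tau> n"
    have t: "t > 0" using tau by (simp add: t_def)
    define R where "R = T + (\<lambda>x. fscale t (S x))"
    have R: "R \<in> Lop p" unfolding R_def by (intro Lop_add[OF T Lop_scale[OF S p] p])
    have "f R = 1 + t * f S" unfolding R_def using ld_add[OF f p T Lop_scale[OF S p]] ld_scale[OF f p S] fT by simp
    moreover have "\<bar>f R\<bar> \<le> opnorm p R" using dual_bound[OF f p R] df by simp
    ultimately have "opnorm p R \<ge> 1 + t * f S" by simp
    moreover have "1 + e * t < 1 + t * f S" using t fS by (simp add: e_def)
    ultimately have "1 + e * t < opnorm p R" by simp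
    then obtain y where y: "y \<in> lp p" "lpnorm p y \<le> 1" "1 + e * t < lpnorm p (R y)"
      using opnorm_attain[OF R p] by blast
    then show ?thesis by (intro exI[of _ y]) (simp add: R_def t_def)
  qed
  then obtain Z where Z: "\<And>n. Z n \<in> lp p" "\<And>n. lpnorm p (Z n) \<le> 1"
    and big: "\<And>n. lpnorm p (T (Z n) + fscale (\<tau> n) (S (Z n))) > 1 + e * \<tau> n"
    by metis
  have tau0: "\<tau> \<longlonglongrightarrow> 0" unfolding \<tau>_def by (rule LIMSEQ_inverse_real_of_nat)
  have lT: "(\<lambda>n. lpnorm p (T (Z n))) \<longlonglongrightarrow> 1"
  proof (rule real_tendsto_sandwich)
    show "\<forall>\<^sub>F n in sequentially. 1 - \<tau> n * opnorm p S \<le> lpnorm p (T (Z n))"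
    proof (rule always_eventually, rule allI)
      fix n
      have a: "lpnorm p (T (Z n) + fscale (\<tau> n) (S (Z n))) \<le> lpnorm p (T (Z n)) + lpnorm p (fscale (\<tau> n) (S (Z n)))"
        by (rule minkowski'[OF p lop_in[OF T p Z(1)] lp_scale[OF lop_in[OF S p Z(1)]]])
      have "lpnorm p (S (Z n)) \<le> opnorm p S"
        using opnorm_bound[OF S p Z(1), of n] Z(2)[of n] opnorm_nonneg[OF S p]
        by (meson mult_left_le order_trans)
      then have b: "lpnorm p (fscale (\<tau> n) (S (Z n))) \<le> \<tau> n * opnorm p S"
        using lpnorm_scale[OF lop_in[OF S p Z(1)] p0, of "\<tau> n" n] tau[of n] by simp
      have "0 \<le> e * \<tau> n" using e tau[of n] by simp
      then show "1 - \<tau> n * opnorm p S \<le> lpnorm p (T (Z n))" using a b big[of n] by linarith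
    qed
    have "lpnorm p (T (Z n)) \<le> 1" for n using opnorm_bound[OF T p Z(1), of n] nT Z(2)[of n] by simp
    then show "\<forall>\<^sub>F n in sequentially. lpnorm p (T (Z n)) \<le> 1" by simp
    show "(\<lambda>n. 1 - \<tau> n * opnorm p S) \<longlonglongrightarrow> 1"
      using tendsto_diff[OF tendsto_const tendsto_mult[OF tau0 tendsto_const], of 1 "opnorm p S"] by simp
  qed (rule tendsto_const)
  obtain r x where r: "strict_mono r" and x: "x \<in> MT p T" and lz: "(\<lambda>n. lpnorm p (Z (r n) - x)) \<longlonglongrightarrow> 0"
    using stepA[OF T p nT dK Z lT] by blast
  have "pair (Jd p (T x)) (S x) \<ge> e"
  proof (rule stepB[OF T p nT S x, where z="\<lambda>n. Z (r n)" and \<tau>="\<lambda>n. \<tau> (r n)"])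
    show "(\<lambda>n. \<tau> (r n)) \<longlonglongrightarrow> 0" using LIMSEQ_subseq_LIMSEQ[OF tau0 r] by (simp add: o_def)
  qed (use Z lz tau e big in auto)
  then show False using hyp[OF x] e by simp
qed

lemma Jd_neg: "Jd p (- u) = - Jd p u"
  by (simp add: Jd_def fun_eq_iff sgn_minus)

lemma pair_neg_neg: "pair (- a) (- b) = pair a b"
  by (simp add: pair_def)

lemma MT_Jd: assumes T: "T \<in> Lop p" and p: "1 < p" and nT: "opnorm p T = 1" and z: "z \<in> MT p T"
  shows "Jd p (T z) \<in> lp (p / (p - 1))" "T z \<in> lp p" "T z \<noteq> 0" "z \<in> lp p"
proof -
  have c: "conj p (p / (p - 1))" by (rule conj_exists[OF p])
  have zl: "z \<in> lp p" and n: "lpnorm p (T z) = 1" using z nT by (auto simp: MT_def)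
  show "T z \<noteq> 0" using n by auto
  then show "Jd p (T z) \<in> lp (p / (p - 1))" using Jd_props(1)[OF c lop_in[OF T p zl]] by simp
  show "T z \<in> lp p" by (rule lop_in[OF T p zl])
  show "z \<in> lp p" by (rule zl)
qed

lemma upper_eq:
  assumes T: "T \<in> Lop p" and p: "1 < p" and nT: "opnorm p T = 1" and dK: "dist_Kop p T < 1"
    and fJ: "f \<in> Jset p T" and S: "S \<in> Lop p"
    and hyp: "\<And>z. z \<in> MT p T \<Longrightarrow> pair (Jd p (T z)) (S z) = 0"
  shows "f S = 0"
proof -
  have c: "conj p (p / (p - 1))" by (rule conj_exists[OF p])
  have f: "f \<in> Ldual p" using fJ by (simp add: Jset_def)
  have S': "(\<lambda>x. fscale (-1) (S x)) \<in> Lop p" by (rule Lop_scale[OF S p])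
  have hyp': "pair (Jd p (T z)) (fscale (-1) (S z)) = 0" if z: "z \<in> MT p T" for z
  proof -
    note M = MT_Jd[OF T p nT z]
    show ?thesis using pair_scale_right[OF c lop_in[OF S p M(4)] M(1), of "-1"] hyp[OF z] by simp
  qed
  have "f (\<lambda>x. fscale (-1) (S x)) \<le> 0" by (rule upper_le[OF T p nT dK fJ S' hyp'])
  then have "f S \<ge> 0" using ld_scale[OF f p S, of "-1"] by simp
  moreover have "f S \<le> 0" by (rule upper_le[OF T p nT dK fJ S hyp])
  ultimately show ?thesis by simp
qed

definition linf :: "real \<Rightarrow> (((nat \<Rightarrow> real) \<Rightarrow> (nat \<Rightarrow> real)) \<Rightarrow> real) \<Rightarrow> bool" where
  "linf p h \<longleftrightarrow> (\<forall>S\<in>Lop p. \<forall>T\<in>Lop p. h (S + T) = h S + h T)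
      \<and> (\<forall>c. \<forall>S\<in>Lop p. h (\<lambda>x. fscale c (S x)) = c * h S) \<and> (\<forall>S. S \<notin> Lop p \<longrightarrow> h S = 0)"

lemma fmod: "module (fscale :: real \<Rightarrow> ('a \<Rightarrow> real) \<Rightarrow> ('a \<Rightarrow> real))"
  unfolding module_def by (auto simp: fscale_def fun_eq_iff algebra_simps)

lemma span_kernel:
  fixes g :: "nat \<Rightarrow> (((nat \<Rightarrow> real) \<Rightarrow> (nat \<Rightarrow> real)) \<Rightarrow> real)"
    and f :: "((nat \<Rightarrow> real) \<Rightarrow> (nat \<Rightarrow> real)) \<Rightarrow> real"
  assumes p: "1 < p" and g: "\<And>i. i < k \<Longrightarrow> linf p (g i)" and f: "linf p f"
    and ker: "\<And>S. S \<in> Lop p \<Longrightarrow> (\<forall>i<k. g i S = 0) \<Longrightarrow> f S = 0"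
  shows "f \<in> module.span fscale (g ` {..<k})"
  using g f ker
proof (induction k arbitrary: g f)
  case 0
  have "f = 0"
  proof
    fix S show "f S = 0 S"
      using "0.prems"(2) "0.prems"(3)[of S] by (cases "S \<in> Lop p") (auto simp: linf_def)
  qed
  then show ?case by (simp only: module.span_zero[OF fmod])
next
  case (Suc k)
  define h where "h = g k"
  have hl: "linf p h" using Suc.prems(1)[of k] by (simp add: h_def)
  have sub: "module.span fscale (g ` {..<k}) \<subseteq> module.span fscale (g ` {..<Suc k})"
    by (rule module.span_mono[OF fmod]) auto
  have hk: "h \<in> module.span fscale (g ` {..<Suc k})"
    by (rule module.span_base[OF fmod]) (auto simp: h_def)
  show ?case
  proof (cases "\<exists>E\<in>Lop p. h E \<noteq> 0")
    case True
    then obtain E where E: "E \<in> Lop p" "h E \<noteq> 0" by blast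
    define E' where "E' = (\<lambda>x. fscale (1 / h E) (E x))"
    have E': "E' \<in> Lop p" unfolding E'_def by (rule Lop_scale[OF E(1) p])
    have hE': "h E' = 1" using hl E unfolding E'_def linf_def by simp
    define g' where "g' i = (\<lambda>S. g i S - g i E' * h S)" for i
    define f' where "f' = (\<lambda>S. f S - f E' * h S)"
    have lin_comb: "linf p (\<lambda>S. a S - c * h S)" if a: "linf p a" for a c
      using a hl unfolding linf_def by (simp add: algebra_simps)
    have g': "linf p (g' i)" if "i < k" for i
      unfolding g'_def using lin_comb Suc.prems(1) that by simp
    have f': "linf p f'" unfolding f'_def using lin_comb Suc.prems(2) by simp
    have ker': "f' S = 0" if S: "S \<in> Lop p" and z: "\<forall>i<k. g' i S = 0" for S
    proof -
      define S' where "S' = S + (\<lambda>x. fscale (- h S) (E' x))"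
      have S'l: "S' \<in> Lop p" unfolding S'_def by (intro Lop_add[OF S Lop_scale[OF E' p] p])
      have ev: "a S' = a S - h S * a E'" if a: "linf p a" for a
        using a S E' Lop_scale[OF E' p] unfolding S'_def linf_def by simp
      have "h S' = 0" using ev[OF hl] hE' by simp
      moreover have "g i S' = 0" if "i < k" for i
        using ev[OF Suc.prems(1)[of i]] z that by (simp add: g'_def mult.commute)
      ultimately have "\<forall>i<Suc k. g i S' = 0" by (auto simp: h_def less_Suc_eq)
      then have "f S' = 0" by (rule Suc.prems(3)[OF S'l])
      then show ?thesis using ev[OF Suc.prems(2)] by (simp add: f'_def mult.commute)
    qed
    have IH: "f' \<in> module.span fscale (g' ` {..<k})"
      by (rule Suc.IH) (use g' f' ker' in auto)
    have "g' ` {..<k} \<subseteq> module.span fscale (g ` {..<Suc k})"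
    proof
      fix a assume "a \<in> g' ` {..<k}"
      then obtain i where i: "i < k" "a = g' i" by blast
      have "a = g i + fscale (- g i E') h" using i by (simp add: g'_def fscale_def fun_eq_iff)
      moreover have "g i \<in> module.span fscale (g ` {..<Suc k})"
        by (rule module.span_base[OF fmod]) (use i in auto)
      ultimately show "a \<in> module.span fscale (g ` {..<Suc k})"
        using module.span_add[OF fmod] module.span_scale[OF fmod hk] by metis
    qed
    then have "module.span fscale (g' ` {..<k}) \<subseteq> module.span fscale (g ` {..<Suc k})"
      by (intro module.span_minimal[OF fmod] module.subspace_span[OF fmod])
    then have f'in: "f' \<in> module.span fscale (g ` {..<Suc k})" using IH by blast
    have eqf: "f = f' + fscale (f E') h" by (simp add: f'_def fscale_def fun_eq_iff)
    show ?thesis by (subst eqf) (rule module.span_add[OF fmod f'in module.span_scale[OF fmod hk]])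
  next
    case False
    have "f \<in> module.span fscale (g ` {..<k})"
    proof (rule Suc.IH)
      fix S assume S: "S \<in> Lop p" "\<forall>i<k. g i S = 0"
      then have "\<forall>i<Suc k. g i S = 0" using False by (auto simp: h_def less_Suc_eq)
      then show "f S = 0" by (rule Suc.prems(3)[OF S(1)])
    qed (use Suc.prems in auto)
    then show ?thesis using sub by blast
  qed
qed

lemma Lop_rank1: assumes v: "v \<in> lp p" and p: "1 < p"
  shows "(\<lambda>x. if x \<in> lp p then fscale (x m) v else 0) \<in> Lop p"
proof -
  have p0: "p > 0" using p by simp
  have b: "lpnorm p (fscale (x m) v) \<le> lpnorm p v * lpnorm p x" if x: "x \<in> lp p" for x
    using lpnorm_scale[OF v p0, of "x m"] coord_le[OF x p0, of m] lpnorm_nonneg[of p v]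
    by (simp add: mult.commute mult_left_mono)
  then have b': "\<exists>C. \<forall>x\<in>lp p. lpnorm p (if x \<in> lp p then fscale (x m) v else 0) \<le> C * lpnorm p x"
    by auto
  show ?thesis unfolding Lop_def using b' lp_add[OF _ _ p0] lp_scale[of _ p] v
    by (auto simp: fscale_def fun_eq_iff algebra_simps)
qed

lemma sum_fun_apply: "(\<Sum>i\<in>A. g i) x = (\<Sum>i\<in>A. g i x)"
  by (induction A rule: infinite_finite_induct) auto

theorem corollary3p3:
  fixes p :: real and T :: "(nat \<Rightarrow> real) \<Rightarrow> (nat \<Rightarrow> real)"
    and k :: nat and x :: "nat \<Rightarrow> (nat \<Rightarrow> real)"
  assumes "1 < p"
    and "T \<in> Lop p" and "opnorm p T = 1"
    and "dist_Kop p T < 1"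
    and "\<forall>i<k. x i \<in> lp p"
    and "MT p T = {x i |i. i < k} \<union> {- x i |i. i < k}"
    and "\<forall>c. (\<Sum>i<k. fscale (c i) (x i)) = 0 \<longrightarrow> (\<forall>i<k. c i = 0)"
  shows "k_smooth p k T"
proof -
  note p = assms(1) and T = assms(2) and nT = assms(3) and dK = assms(4)
  have p0: "p > 0" using p by simp
  define q where "q = p / (p - 1)"
  have c: "conj p q" unfolding q_def by (rule conj_exists[OF p])
  have xM: "x i \<in> MT p T" if "i < k" for i using assms(6) that by blast
  have xl: "x i \<in> lp p" if "i < k" for i using assms(5) that by blast
  have nTx: "lpnorm p (T (x i)) = 1" if "i < k" for i using xM[OF that] nT by (simp add: MT_def)
  define y where "y i = Jd p (T (x i))" for i
  have y_lp: "y i \<in> lp q" if "i < k" for i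
    using MT_Jd(1)[OF T p nT xM[OF that]] by (simp add: y_def q_def)
  have Tx0: "T (x i) \<noteq> 0" if "i < k" for i using MT_Jd(3)[OF T p nT xM[OF that]] .
  have yT: "pair (y i) (T (x i)) = 1" if "i < k" for i
    using Jd_props(3)[OF c lop_in[OF T p xl[OF that]] Tx0[OF that]] nTx[OF that] by (simp add: y_def)
  have y_n: "lpnorm q (y i) = 1" if "i < k" for i
    using Jd_props(2)[OF c lop_in[OF T p xl[OF that]] Tx0[OF that]] by (simp add: y_def)
  define F where "F i = (\<lambda>S. if S \<in> Lop p then pair (y i) (S (x i)) else 0)" for i
  have F_bound: "\<bar>F i S\<bar> \<le> opnorm p S" if i: "i < k" and S: "S \<in> Lop p" for i S
  proof -
    have "\<bar>F i S\<bar> \<le> lpnorm q (y i) * lpnorm p (S (x i))"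
      using pair_bound[OF c lop_in[OF S p xl[OF i]] y_lp[OF i]] S by (simp add: F_def)
    also have "\<dots> \<le> opnorm p S"
      using y_n[OF i] opnorm_bound[OF S p xl[OF i]] xM[OF i] by (simp add: MT_def)
    finally show ?thesis .
  qed
  have F_lin: "linf p (F i)" if i: "i < k" for i
    unfolding linf_def F_def
    using Lop_add[OF _ _ p] Lop_scale[OF _ p]
      pair_add_right[OF c lop_in[OF _ p xl[OF i]] lop_in[OF _ p xl[OF i]] y_lp[OF i]]
      pair_scale_right[OF c lop_in[OF _ p xl[OF i]] y_lp[OF i]]
    by auto
  have F_Ldual: "F i \<in> Ldual p" if i: "i < k" for i
  proof -
    have "\<exists>C. \<forall>S\<in>Lop p. \<bar>F i S\<bar> \<le> C * opnorm p S"
      by (rule exI[of _ 1]) (use F_bound[OF i] in simp)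
    then show ?thesis using F_lin[OF i] unfolding Ldual_def linf_def by blast
  qed
  have FT: "F i T = 1" if i: "i < k" for i using yT[OF i] T by (simp add: F_def)
  have F_J: "F i \<in> Jset p T" if i: "i < k" for i
  proof -
    have le: "dualnorm p (F i) \<le> 1" unfolding dualnorm_def
    proof (rule cSup_least)
      show "(\<lambda>S. \<bar>F i S\<bar>) ` {S \<in> Lop p. opnorm p S \<le> 1} \<noteq> {}" using T nT by auto
      fix a assume "a \<in> (\<lambda>S. \<bar>F i S\<bar>) ` {S \<in> Lop p. opnorm p S \<le> 1}"
      then obtain S where "S \<in> Lop p" "opnorm p S \<le> 1" "a = \<bar>F i S\<bar>" by blast
      then show "a \<le> 1" using F_bound[OF i] by force
    qed
    have ge: "\<bar>F i T\<bar> \<le> dualnorm p (F i)" using dual_ge[OF F_Ldual[OF i] p T] nT by simp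
    show ?thesis using le ge FT[OF i] F_Ldual[OF i] by (simp add: Jset_def)
  qed
  have J_sub: "Jset p T \<subseteq> module.span fscale (F ` {..<k})"
  proof
    fix f assume fJ: "f \<in> Jset p T"
    have fl: "linf p f" using fJ by (simp add: Jset_def Ldual_def linf_def)
    show "f \<in> module.span fscale (F ` {..<k})"
    proof (rule span_kernel[OF p F_lin fl])
      fix S assume S: "S \<in> Lop p" and z: "\<forall>i<k. F i S = 0"
      show "f S = 0"
      proof (rule upper_eq[OF T p nT dK fJ S])
        fix w assume "w \<in> MT p T"
        then obtain i where i: "i < k" and w: "w = x i \<or> w = - x i" using assms(6) by blast
        have a: "pair (Jd p (T (x i))) (S (x i)) = 0" using z i S by (simp add: F_def y_def)
        show "pair (Jd p (T w)) (S w) = 0"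
          using w
        proof
          assume "w = x i" then show ?thesis using a by simp
        next
          assume "w = - x i"
          then show ?thesis using a lop_uminus[OF T p xl[OF i]] lop_uminus[OF S p xl[OF i]]
            by (simp add: Jd_neg pair_neg_neg)
        qed
      qed
    qed
  qed
  have indep_c: "\<forall>i<k. cc i = 0" if sum0: "(\<Sum>i<k. fscale (cc i) (F i)) = 0" for cc
  proof (intro allI impI)
    fix j assume j: "j < k"
    define d where "d i = cc i * pair (y i) (T (x j))" for i
    have "(\<Sum>i<k. fscale (d i) (x i)) = 0"
    proof
      fix m
      define R where "R = (\<lambda>z. if z \<in> lp p then fscale (z m) (T (x j)) else 0)"
      have R: "R \<in> Lop p" unfolding R_def by (rule Lop_rank1[OF lop_in[OF T p xl[OF j]] p])
      have FR: "F i R = x i m * pair (y i) (T (x j))" if i: "i < k" for i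
        using R xl[OF i] pair_scale_right[OF c lop_in[OF T p xl[OF j]] y_lp[OF i]]
        by (simp add: F_def R_def)
      have "0 = (\<Sum>i<k. fscale (cc i) (F i)) R" using sum0 by simp
      also have "\<dots> = (\<Sum>i<k. cc i * F i R)" by (simp add: sum_fun_apply)
      also have "\<dots> = (\<Sum>i<k. d i * x i m)" using FR by (simp add: d_def mult_ac)
      finally show "(\<Sum>i<k. fscale (d i) (x i)) m = 0 m" by (simp add: sum_fun_apply mult.commute)
    qed
    then have "d j = 0" using assms(7) j by blast
    then show "cc j = 0" using yT[OF j] by (simp add: d_def)
  qed
  have inj: "inj_on F {..<k}"
  proof (rule inj_onI, rule ccontr)
    fix i j assume i: "i \<in> {..<k}" and j: "j \<in> {..<k}" and eq: "F i = F j" and ne: "i \<noteq> j"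
    define cc where "cc l = (if l = i then 1 else if l = j then -1 else (0::real))" for l
    have trm: "fscale (cc l) (F l) = (if l = i then F i else 0) + (if l = j then - F j else 0)" for l
      using ne by (auto simp: cc_def fscale_def fun_eq_iff)
    have "(\<Sum>l<k. fscale (cc l) (F l)) = (\<Sum>l<k. (if l = i then F i else 0)) + (\<Sum>l<k. (if l = j then - F j else 0))"
      by (simp only: trm sum.distrib)
    also have "\<dots> = F i + - F j" using i j by simp
    also have "\<dots> = 0" using eq by simp
    finally have "\<forall>l<k. cc l = 0" by (rule indep_c)
    then have "cc i = 0" using i by simp
    then show False by (simp add: cc_def)
  qed
  define B where "B = F ` {..<k}"
  have fin: "finite B" by (simp add: B_def)
  have card: "card B = k" using card_image[OF inj] by (simp add: B_def)
  have nd: "\<not> module.dependent fscale B"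
  proof
    assume dep: "module.dependent fscale B"
    have "\<exists>u. (\<exists>v\<in>B. u v \<noteq> 0) \<and> (\<Sum>v\<in>B. fscale (u v) v) = 0"
      by (rule iffD1[OF module.dependent_finite[OF fmod fin] dep])
    then obtain u where u: "\<exists>v\<in>B. u v \<noteq> 0" and s: "(\<Sum>v\<in>B. fscale (u v) v) = 0"
      by (elim exE conjE)
    have "(\<Sum>v\<in>F ` {..<k}. fscale (u v) v) = (\<Sum>l<k. fscale (u (F l)) (F l))"
      using sum.reindex[OF inj, of "\<lambda>v. fscale (u v) v"] by (simp only: comp_def)
    then have "(\<Sum>l<k. fscale (u (F l)) (F l)) = 0" using s by (simp only: B_def)
    then have "\<forall>l<k. u (F l) = 0" by (rule indep_c)
    then show False using u by (auto simp: B_def)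
  qed
  have sp1: "module.span fscale B \<subseteq> module.span fscale (Jset p T)"
    by (rule module.span_mono[OF fmod]) (unfold B_def, use F_J in blast)
  have sp2: "module.span fscale (Jset p T) \<subseteq> module.span fscale B"
    unfolding B_def by (rule module.span_minimal[OF fmod J_sub module.subspace_span[OF fmod]])
  have "module.span fscale B = module.span fscale (Jset p T)" using sp1 sp2 by (rule equalityI)
  then show ?thesis unfolding k_smooth_def using fin card nd by blast
qed

end
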